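(* Let $A(z)$ be an $n\times n$ Hermite matrix of Laurent polynomials such that $\det A(z)$ is a nonzero monomial (i.e. $\det A(z)=cz^k$ with $c\ne0$, $k\in\mathbb{Z}$). Then there exist nonnegative integers $\nu_+,\nu_-$ with $\nu_++\nu_-=n$ and an $n\times n$ matrix $U(z)$ of Laurent polynomials such that $A(z)=U(z)\operatorname{diag}(I_{\nu_+},-I_{\nu_-})U^\star(z)$.
   Context: For a matrix $U(z)=\sum_k U_k z^k$ of Laurent polynomials, $U^\star(z):=\sum_k\overline{U_k}^T z^{-k}$; $A$ is a Hermite matrix of Laurent polynomials if $A^\star=A$. *)

theory Defs
  imports "HOL-Computational_Algebra.Formal_Laurent_Series" "Jordan_Normal_Form.Determinant"
begin

definition is_laurent_poly :: "complex fls \<Rightarrow> bool" where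
  "is_laurent_poly f \<longleftrightarrow> finite {k. fls_nth f k \<noteq> 0}"

definition fls_star :: "complex fls \<Rightarrow> complex fls" where
  "fls_star f = Abs_fls (\<lambda>k. cnj (fls_nth f (- k)))"

definition laurent_poly_mat :: "complex fls mat \<Rightarrow> bool" where
  "laurent_poly_mat U \<longleftrightarrow>
     (\<forall>i < dim_row U. \<forall>j < dim_col U. is_laurent_poly (U $$ (i, j)))"

definition mat_star :: "complex fls mat \<Rightarrow> complex fls mat" where
  "mat_star U = mat (dim_col U) (dim_row U) (\<lambda>(i, j). fls_star (U $$ (j, i)))"

definition hermite_lp_mat :: "complex fls mat \<Rightarrow> bool" where
  "hermite_lp_mat A \<longleftrightarrow> laurent_poly_mat A \<and> mat_star A = A"

definition signature_mat :: "nat \<Rightarrow> nat \<Rightarrow> complex fls mat" where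
  "signature_mat p m = mat (p + m) (p + m)
     (\<lambda>(i, j). if i = j then (if i < p then 1 else - 1) else 0)"

end

theory Submission
  imports Defs
begin


notation fls_nth (infixl "$~" 75)


lemma fls_times_nth_supp:
  fixes f g :: "'a::comm_ring_1 fls"
  assumes S: "finite S" and sub: "\<And>i. f$~i \<noteq> 0 \<Longrightarrow> g$~(n-i) \<noteq> 0 \<Longrightarrow> i \<in> S"
  shows "(f*g)$~n = (\<Sum>i\<in>S. f$~i * g$~(n-i))"
proof -
  let ?h = "\<lambda>i. f$~i * g$~(n-i)"
  let ?Z = "{i. ?h i \<noteq> 0}"
  have Z1: "?Z \<subseteq> {fls_subdegree f..n - fls_subdegree g}"
  proof
    fix i assume "i \<in> ?Z"
    then have a: "f$~i \<noteq> 0" and b: "g$~(n-i) \<noteq> 0" by auto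
    from fls_subdegree_leI[OF a] fls_subdegree_leI[OF b] show "i \<in> {fls_subdegree f..n - fls_subdegree g}" by auto
  qed
  have Z2: "?Z \<subseteq> S"
  proof
    fix i assume "i \<in> ?Z"
    then have a: "f$~i \<noteq> 0" and b: "g$~(n-i) \<noteq> 0" by auto
    show "i \<in> S" by (rule sub[OF a b])
  qed
  have "(f*g)$~n = (\<Sum>i=fls_subdegree f..n - fls_subdegree g. ?h i)" by (rule fls_times_nth(2))
  also have "\<dots> = (\<Sum>i\<in>?Z. ?h i)"
    by (rule sum.mono_neutral_right[OF _ Z1]) simp_all
  also have "\<dots> = (\<Sum>i\<in>S. ?h i)"
    by (rule sum.mono_neutral_left[OF S Z2]) simp_all
  finally show ?thesis .
qed

lemma lp_bounded: "is_laurent_poly f \<longleftrightarrow> (\<exists>N::int. \<forall>k. N < \<bar>k\<bar> \<longrightarrow> f$~k = 0)"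
proof
  assume "is_laurent_poly f"
  then have fin: "finite {k. f$~k \<noteq> 0}" unfolding is_laurent_poly_def .
  define N where "N = (\<Sum>k\<in>{k. f$~k \<noteq> 0}. \<bar>k\<bar>)"
  have "\<forall>k. N < \<bar>k\<bar> \<longrightarrow> f$~k = 0"
  proof (intro allI impI, rule ccontr)
    fix k assume "N < \<bar>k\<bar>" "f$~k \<noteq> 0"
    then have "\<bar>k\<bar> \<le> N" unfolding N_def
      using member_le_sum[of k "{k. f$~k \<noteq> 0}" abs] fin by auto
    with \<open>N < \<bar>k\<bar>\<close> show False by simp
  qed
  then show "\<exists>N::int. \<forall>k. N < \<bar>k\<bar> \<longrightarrow> f$~k = 0" by blast
next
  assume "\<exists>N::int. \<forall>k. N < \<bar>k\<bar> \<longrightarrow> f$~k = 0"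
  then obtain N::int where N: "\<forall>k. N < \<bar>k\<bar> \<longrightarrow> f$~k = 0" by blast
  have "{k. f$~k \<noteq> 0} \<subseteq> {-N..N}" using N by force
  then show "is_laurent_poly f" unfolding is_laurent_poly_def by (rule finite_subset) simp
qed

lemma lp_boundE:
  assumes "is_laurent_poly f"
  obtains N where "N \<ge> 0" "\<And>k. N < \<bar>k\<bar> \<Longrightarrow> f$~k = 0"
proof -
  from assms obtain N::int where N: "\<forall>k. N < \<bar>k\<bar> \<longrightarrow> f$~k = 0" unfolding lp_bounded by blast
  show ?thesis using N by (intro that[of "max N 0"]) auto
qed

lemma lp_boundI: "(\<And>k. N < \<bar>k\<bar> \<Longrightarrow> f$~k = 0) \<Longrightarrow> is_laurent_poly f"
  unfolding lp_bounded by blast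

lemma lp_zero[simp]: "is_laurent_poly 0" by (rule lp_boundI[of 0]) simp
lemma lp_one[simp]: "is_laurent_poly 1" by (rule lp_boundI[of 0]) simp
lemma lp_const[simp]: "is_laurent_poly (fls_const c)" by (rule lp_boundI[of 0]) simp

lemma X_intpow_nth: "(fls_X_intpow i :: 'a::{zero_neq_one} fls) $~ n = (if n = i then 1 else 0)"
  by simp

lemma lp_X_intpow[simp]: "is_laurent_poly (fls_X_intpow i)"
  by (rule lp_boundI[of "\<bar>i\<bar>"]) auto

lemma lp_add[simp]: assumes "is_laurent_poly f" "is_laurent_poly g" shows "is_laurent_poly (f + g)"
proof -
  obtain N where N: "\<And>k. N < \<bar>k\<bar> \<Longrightarrow> f$~k = 0" using lp_boundE[OF assms(1)] by blast
  obtain M where M: "\<And>k. M < \<bar>k\<bar> \<Longrightarrow> g$~k = 0" using lp_boundE[OF assms(2)] by blast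
  show ?thesis by (rule lp_boundI[of "max N M"]) (simp add: N M)
qed

lemma lp_uminus[simp]: assumes "is_laurent_poly f" shows "is_laurent_poly (- f)"
proof -
  obtain N where N: "\<And>k. N < \<bar>k\<bar> \<Longrightarrow> f$~k = 0" using lp_boundE[OF assms(1)] by blast
  show ?thesis by (rule lp_boundI[of N]) (simp add: N)
qed

lemma lp_diff[simp]: "is_laurent_poly f \<Longrightarrow> is_laurent_poly g \<Longrightarrow> is_laurent_poly (f - g)"
  using lp_add[of f "-g"] by simp

lemma lp_mult[simp]:
  assumes "is_laurent_poly f" "is_laurent_poly g" shows "is_laurent_poly (f * g)"
proof -
  obtain N where N: "\<And>k. N < \<bar>k\<bar> \<Longrightarrow> f$~k = 0" using lp_boundE[OF assms(1)] by blast
  obtain M where M: "\<And>k. M < \<bar>k\<bar> \<Longrightarrow> g$~k = 0" using lp_boundE[OF assms(2)] by blast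
  show ?thesis
  proof (rule lp_boundI[of "N + M"])
    fix k :: int assume k: "N + M < \<bar>k\<bar>"
    have "(f*g)$~k = (\<Sum>i\<in>{}. f$~i * g$~(k-i))"
    proof (rule fls_times_nth_supp)
      fix i assume "f$~i \<noteq> 0" "g$~(k-i) \<noteq> 0"
      then have "\<bar>i\<bar> \<le> N" "\<bar>k-i\<bar> \<le> M" using N M by force+
      with k show "i \<in> {}" by auto
    qed simp
    then show "(f*g)$~k = 0" by simp
  qed
qed

lemma lp_sum[simp]: "(\<And>x. x \<in> A \<Longrightarrow> is_laurent_poly (f x)) \<Longrightarrow> is_laurent_poly (\<Sum>x\<in>A. f x)"
  by (induction A rule: infinite_finite_induct) auto

lemma lp_prod[simp]: "(\<And>x. x \<in> A \<Longrightarrow> is_laurent_poly (f x)) \<Longrightarrow> is_laurent_poly (\<Prod>x\<in>A. f x)"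
  by (induction A rule: infinite_finite_induct) auto

lemma lp_of_int[simp]: "is_laurent_poly (of_int z)"
  by (metis fls_of_int lp_const)

lemma star_nth: assumes "is_laurent_poly f" shows "fls_star f $~ k = cnj (f $~ (-k))"
proof -
  obtain N where N: "\<And>k. N < \<bar>k\<bar> \<Longrightarrow> f$~k = 0" using lp_boundE[OF assms] by blast
  have "\<forall>n< -N. cnj (f $~ (-n)) = 0" using N by auto
  then show ?thesis unfolding fls_star_def by (subst nth_Abs_fls_lower_bound) auto
qed

lemma lp_star[simp]: assumes "is_laurent_poly f" shows "is_laurent_poly (fls_star f)"
proof -
  obtain N where N: "\<And>k. N < \<bar>k\<bar> \<Longrightarrow> f$~k = 0" using lp_boundE[OF assms] by blast
  show ?thesis by (rule lp_boundI[of N]) (simp add: star_nth[OF assms] N)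
qed

lemma star_star[simp]: "is_laurent_poly f \<Longrightarrow> fls_star (fls_star f) = f"
  by (rule fls_eqI) (simp add: star_nth)

lemma star_add: "is_laurent_poly f \<Longrightarrow> is_laurent_poly g \<Longrightarrow> fls_star (f + g) = fls_star f + fls_star g"
  by (rule fls_eqI) (simp add: star_nth)

lemma star_uminus: "is_laurent_poly f \<Longrightarrow> fls_star (- f) = - fls_star f"
  by (rule fls_eqI) (simp add: star_nth)

lemma star_diff: "is_laurent_poly f \<Longrightarrow> is_laurent_poly g \<Longrightarrow> fls_star (f - g) = fls_star f - fls_star g"
  by (rule fls_eqI) (simp add: star_nth)

lemma star_const[simp]: "fls_star (fls_const c) = fls_const (cnj c)"
  by (rule fls_eqI) (simp add: star_nth)

lemma star_zero[simp]: "fls_star 0 = 0"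
  using star_const[of 0] by simp

lemma star_one[simp]: "fls_star 1 = 1"
  using star_const[of 1] by simp

lemma star_X_intpow[simp]: "fls_star (fls_X_intpow i) = fls_X_intpow (-i)"
  by (rule fls_eqI) (auto simp add: star_nth)

lemma star_mult:
  assumes f: "is_laurent_poly f" and g: "is_laurent_poly g"
  shows "fls_star (f * g) = fls_star f * fls_star g"
proof (rule fls_eqI)
  fix k
  obtain N where N: "\<And>k. N < \<bar>k\<bar> \<Longrightarrow> f$~k = 0" using lp_boundE[OF f] by blast
  have "fls_star (f*g) $~ k = cnj ((f*g) $~ (-k))" by (simp add: star_nth f g)
  also have "(f*g) $~ (-k) = (\<Sum>i\<in>{-N..N}. f$~i * g$~(-k-i))"
    by (rule fls_times_nth_supp) (use N in force)+
  also have "cnj \<dots> = (\<Sum>i\<in>{-N..N}. cnj (f$~i) * cnj (g$~(-k-i)))" by simp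
  also have "\<dots> = (\<Sum>j\<in>{-N..N}. cnj (f$~(-j)) * cnj (g$~(-(k-j))))"
    by (rule sum.reindex_bij_witness[of _ uminus uminus]) auto
  also have "\<dots> = (\<Sum>j\<in>{-N..N}. fls_star f $~ j * fls_star g $~ (k-j))" by (simp add: star_nth f g)
  also have "\<dots> = (fls_star f * fls_star g) $~ k"
  proof (rule sym, rule fls_times_nth_supp)
    fix i assume "fls_star f $~ i \<noteq> 0"
    then have "f $~ (-i) \<noteq> 0" by (simp add: star_nth f)
    then have "\<bar>-i\<bar> \<le> N" using N by force
    then show "i \<in> {-N..N}" by auto
  qed simp
  finally show "fls_star (f*g) $~ k = (fls_star f * fls_star g) $~ k" .
qed

lemma star_sum: "(\<And>x. x \<in> A \<Longrightarrow> is_laurent_poly (f x)) \<Longrightarrow> fls_star (\<Sum>x\<in>A. f x) = (\<Sum>x\<in>A. fls_star (f x))"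
  by (induction A rule: infinite_finite_induct) (auto simp: star_add)

lemma star_prod: "(\<And>x. x \<in> A \<Longrightarrow> is_laurent_poly (f x)) \<Longrightarrow> fls_star (\<Prod>x\<in>A. f x) = (\<Prod>x\<in>A. fls_star (f x))"
  by (induction A rule: infinite_finite_induct) (auto simp: star_mult)

lemma star_of_int[simp]: "fls_star (of_int z) = of_int z"
  by (metis fls_of_int star_const complex_cnj_of_int)




lemma mat_star_carrier[simp]: "U \<in> carrier_mat n m \<Longrightarrow> mat_star U \<in> carrier_mat m n"
  unfolding mat_star_def by auto

lemma mat_star_dims[simp]: "dim_row (mat_star U) = dim_col U" "dim_col (mat_star U) = dim_row U"
  unfolding mat_star_def by auto

lemma mat_star_index[simp]: "i < dim_col U \<Longrightarrow> j < dim_row U \<Longrightarrow> mat_star U $$ (i,j) = fls_star (U $$ (j,i))"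
  unfolding mat_star_def by auto

lemma lpm_index: "laurent_poly_mat U \<Longrightarrow> i < dim_row U \<Longrightarrow> j < dim_col U \<Longrightarrow> is_laurent_poly (U $$ (i,j))"
  unfolding laurent_poly_mat_def by auto

lemma lpmI: "(\<And>i j. i < dim_row U \<Longrightarrow> j < dim_col U \<Longrightarrow> is_laurent_poly (U $$ (i,j))) \<Longrightarrow> laurent_poly_mat U"
  unfolding laurent_poly_mat_def by auto

lemma mult_entry:
  assumes "A \<in> carrier_mat n m" "B \<in> carrier_mat m p" "i < n" "j < p"
  shows "(A * B) $$ (i,j) = (\<Sum>k<m. A $$ (i,k) * B $$ (k,j))"
  using assms by (auto simp: scalar_prod_def atLeast0LessThan intro!: sum.cong)

lemma lpm_mult[simp]:
  assumes "laurent_poly_mat A" "laurent_poly_mat B" "dim_col A = dim_row B"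
  shows "laurent_poly_mat (A * B)"
proof (rule lpmI)
  fix i j assume ij: "i < dim_row (A*B)" "j < dim_col (A*B)"
  have "(A*B) $$ (i,j) = (\<Sum>k<dim_col A. A $$ (i,k) * B $$ (k,j))"
    by (rule mult_entry[of A "dim_row A" "dim_col A" B "dim_col B"]) (use ij assms(3) in auto)
  moreover have "is_laurent_poly (\<Sum>k<dim_col A. A $$ (i,k) * B $$ (k,j))"
    using ij assms by (auto intro!: lp_sum lp_mult lpm_index)
  ultimately show "is_laurent_poly ((A*B) $$ (i,j))" by simp
qed

lemma lpm_star[simp]: "laurent_poly_mat A \<Longrightarrow> laurent_poly_mat (mat_star A)"
  by (rule lpmI) (auto intro!: lp_star lpm_index)

lemma lpm_one[simp]: "laurent_poly_mat (1\<^sub>m n)"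
  by (rule lpmI) auto

lemma lpm_zero[simp]: "laurent_poly_mat (0\<^sub>m n m)"
  by (rule lpmI) auto

lemma lpm_add[simp]: "laurent_poly_mat A \<Longrightarrow> laurent_poly_mat B \<Longrightarrow> dim_row A = dim_row B \<Longrightarrow> dim_col A = dim_col B \<Longrightarrow> laurent_poly_mat (A + B)"
  by (rule lpmI) (auto intro!: lp_add lpm_index)

lemma lpm_mat: "(\<And>i j. i < n \<Longrightarrow> j < m \<Longrightarrow> is_laurent_poly (f (i,j))) \<Longrightarrow> laurent_poly_mat (mat n m f)"
  by (rule lpmI) auto

lemma star_star_mat[simp]: "laurent_poly_mat A \<Longrightarrow> mat_star (mat_star A) = A"
  by (rule eq_matI) (auto simp: lpm_index)

lemma star_one_mat[simp]: "mat_star (1\<^sub>m n) = 1\<^sub>m n"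
  by (rule eq_matI) auto

lemma star_mult_mat:
  assumes A: "A \<in> carrier_mat n m" and B: "B \<in> carrier_mat m p"
    and lA: "laurent_poly_mat A" and lB: "laurent_poly_mat B"
  shows "mat_star (A * B) = mat_star B * mat_star A"
proof (rule eq_matI)
  show "dim_row (mat_star (A * B)) = dim_row (mat_star B * mat_star A)" using A B by simp
  show "dim_col (mat_star (A * B)) = dim_col (mat_star B * mat_star A)" using A B by simp
  fix i j assume "i < dim_row (mat_star B * mat_star A)" "j < dim_col (mat_star B * mat_star A)"
  then have i: "i < p" and j: "j < n" using A B by auto
  have "mat_star (A * B) $$ (i,j) = fls_star ((A*B) $$ (j,i))" using A B i j by simp
  also have "(A*B) $$ (j,i) = (\<Sum>k<m. A $$ (j,k) * B $$ (k,i))" by (rule mult_entry[OF A B j i])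
  also have "fls_star \<dots> = (\<Sum>k<m. fls_star (B $$ (k,i)) * fls_star (A $$ (j,k)))"
    using A B i j lA lB by (subst star_sum) (auto simp: star_mult lpm_index mult.commute intro!: sum.cong)
  also have "\<dots> = (mat_star B * mat_star A) $$ (i,j)"
    by (rule sym, subst mult_entry[of _ p m _ n]) (use A B i j in auto)
  finally show "mat_star (A * B) $$ (i, j) = (mat_star B * mat_star A) $$ (i, j)" .
qed

lemma det_star:
  assumes A: "A \<in> carrier_mat n n" and lA: "laurent_poly_mat A"
  shows "det (mat_star A) = fls_star (det A)"
proof -
  have e: "mat_star A = transpose_mat (map_mat fls_star A)"
    by (rule eq_matI) auto
  have "det (mat_star A) = det (map_mat fls_star A)"
    unfolding e by (rule det_transpose) (use A in auto)
  also have "\<dots> = (\<Sum>p\<in>{p. p permutes {0..<n}}. signof p * (\<Prod>i = 0..<n. fls_star (A $$ (i, p i))))"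
    by (subst det_def'[of _ n]) (use A in \<open>auto intro!: sum.cong prod.cong\<close>)
  also have "\<dots> = fls_star (det A)"
  proof -
    have lpe: "\<And>p i. p permutes {0..<n} \<Longrightarrow> i \<in> {0..<n} \<Longrightarrow> is_laurent_poly (A $$ (i, p i))"
      using A lA by (auto intro!: lpm_index simp: permutes_in_image)
    have lpp: "\<And>p. p permutes {0..<n} \<Longrightarrow> is_laurent_poly (\<Prod>i=0..<n. A $$ (i, p i))"
      by (rule lp_prod, rule lpe)
    have st: "\<And>p. p permutes {0..<n} \<Longrightarrow> fls_star (signof p * (\<Prod>i=0..<n. A $$ (i, p i))) = signof p * (\<Prod>i=0..<n. fls_star (A $$ (i, p i)))"
      by (subst star_mult) (auto simp: lpp intro!: star_prod lpe)
    have lps: "\<And>p. p permutes {0..<n} \<Longrightarrow> is_laurent_poly (signof p * (\<Prod>i=0..<n. A $$ (i, p i)))"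
      by (rule lp_mult) (auto simp: lpp)
    show ?thesis
      unfolding det_def'[OF A]
      by (subst star_sum) (auto simp: st lps intro!: sum.cong)
  qed
  finally show ?thesis .
qed




definition rowop :: "nat \<Rightarrow> nat \<Rightarrow> (nat \<Rightarrow> complex fls) \<Rightarrow> complex fls mat" where
  "rowop n k r = mat n n (\<lambda>(a,b). (if a = b then 1 else 0) + (if a = k then r b else 0))"

definition colop :: "nat \<Rightarrow> nat \<Rightarrow> (nat \<Rightarrow> complex fls) \<Rightarrow> complex fls mat" where
  "colop n k c = mat n n (\<lambda>(a,b). (if a = b then 1 else 0) + (if b = k then c a else 0))"

definition permat :: "nat \<Rightarrow> (nat \<Rightarrow> nat) \<Rightarrow> complex fls mat" where
  "permat n p = mat n n (\<lambda>(a,b). if b = p a then 1 else 0)"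

lemma rowop_carrier[simp]: "rowop n k r \<in> carrier_mat n n" unfolding rowop_def by simp
lemma colop_carrier[simp]: "colop n k r \<in> carrier_mat n n" unfolding colop_def by simp
lemma permat_carrier[simp]: "permat n p \<in> carrier_mat n n" unfolding permat_def by simp

lemma ops_dims[simp]: "dim_row (rowop n k r) = n" "dim_col (rowop n k r) = n"
  "dim_row (colop n k r) = n" "dim_col (colop n k r) = n"
  "dim_row (permat n p) = n" "dim_col (permat n p) = n"
  unfolding rowop_def colop_def permat_def by auto

lemma rowop_index: "a < n \<Longrightarrow> b < n \<Longrightarrow> rowop n k r $$ (a,b) = (if a = b then 1 else 0) + (if a = k then r b else 0)"
  unfolding rowop_def by simp
lemma colop_index: "a < n \<Longrightarrow> b < n \<Longrightarrow> colop n k c $$ (a,b) = (if a = b then 1 else 0) + (if b = k then c a else 0)"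
  unfolding colop_def by simp
lemma permat_index: "a < n \<Longrightarrow> b < n \<Longrightarrow> permat n p $$ (a,b) = (if b = p a then 1 else 0)"
  unfolding permat_def by simp

lemma lpm_rowop[simp]: "(\<And>b. b < n \<Longrightarrow> is_laurent_poly (r b)) \<Longrightarrow> laurent_poly_mat (rowop n k r)"
  unfolding rowop_def by (rule lpm_mat) auto
lemma lpm_colop[simp]: "(\<And>b. b < n \<Longrightarrow> is_laurent_poly (r b)) \<Longrightarrow> laurent_poly_mat (colop n k r)"
  unfolding colop_def by (rule lpm_mat) auto
lemma lpm_permat[simp]: "laurent_poly_mat (permat n p)"
  unfolding permat_def by (rule lpm_mat) auto

lemma rowop_mult_entry:
  assumes H: "H \<in> carrier_mat n m" and a: "a < n" and b: "b < m"
  shows "(rowop n k r * H) $$ (a,b) = H $$ (a,b) + (if a = k then (\<Sum>l<n. r l * H $$ (l,b)) else 0)"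
proof -
  have "(rowop n k r * H) $$ (a,b) = (\<Sum>l<n. ((if a = l then 1 else 0) + (if a = k then r l else 0)) * H $$ (l,b))"
    by (subst mult_entry[OF rowop_carrier H a b]) (use a in \<open>auto simp: rowop_index intro!: sum.cong\<close>)
  also have "\<dots> = (\<Sum>l<n. (if a = l then H $$ (l,b) else 0)) + (\<Sum>l<n. (if a = k then r l * H $$ (l,b) else 0))"
    by (subst sum.distrib[symmetric]) (auto simp: distrib_right intro!: sum.cong)
  also have "\<dots> = H $$ (a,b) + (if a = k then (\<Sum>l<n. r l * H $$ (l,b)) else 0)"
    using a by simp
  finally show ?thesis .
qed

lemma mult_star_rowop_entry:
  assumes H: "H \<in> carrier_mat m n" and a: "a < m" and b: "b < n"
    and lr: "\<And>l. l < n \<Longrightarrow> is_laurent_poly (r l)"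
  shows "(H * mat_star (rowop n k r)) $$ (a,b) = H $$ (a,b) + (if b = k then (\<Sum>l<n. H $$ (a,l) * fls_star (r l)) else 0)"
proof -
  have "(H * mat_star (rowop n k r)) $$ (a,b) = (\<Sum>l<n. H $$ (a,l) * ((if l = b then 1 else 0) + (if b = k then fls_star (r l) else 0)))"
    by (subst mult_entry[OF H _ a b]) (use b lr in \<open>auto simp: rowop_index star_add intro!: sum.cong\<close>)
  also have "\<dots> = (\<Sum>l<n. (if l = b then H $$ (a,l) else 0)) + (\<Sum>l<n. (if b = k then H $$ (a,l) * fls_star (r l) else 0))"
    by (subst sum.distrib[symmetric]) (auto simp: distrib_left intro!: sum.cong)
  also have "\<dots> = H $$ (a,b) + (if b = k then (\<Sum>l<n. H $$ (a,l) * fls_star (r l)) else 0)"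
    using b by simp
  finally show ?thesis .
qed

lemma colop_mult_entry:
  assumes H: "H \<in> carrier_mat n m" and a: "a < n" and b: "b < m" and k: "k < n"
  shows "(colop n k c * H) $$ (a,b) = H $$ (a,b) + c a * H $$ (k,b)"
proof -
  have "(colop n k c * H) $$ (a,b) = (\<Sum>l<n. ((if a = l then 1 else 0) + (if l = k then c a else 0)) * H $$ (l,b))"
    by (subst mult_entry[OF colop_carrier H a b]) (use a in \<open>auto simp: colop_index intro!: sum.cong\<close>)
  also have "\<dots> = (\<Sum>l<n. (if a = l then H $$ (l,b) else 0)) + (\<Sum>l<n. (if l = k then c a * H $$ (l,b) else 0))"
    by (subst sum.distrib[symmetric]) (auto simp: distrib_right intro!: sum.cong)
  also have "\<dots> = H $$ (a,b) + c a * H $$ (k,b)"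
    using a k by simp
  finally show ?thesis .
qed

lemma mult_star_colop_entry:
  assumes H: "H \<in> carrier_mat m n" and a: "a < m" and b: "b < n" and k: "k < n"
    and lr: "\<And>l. l < n \<Longrightarrow> is_laurent_poly (c l)"
  shows "(H * mat_star (colop n k c)) $$ (a,b) = H $$ (a,b) + H $$ (a,k) * fls_star (c b)"
proof -
  have "(H * mat_star (colop n k c)) $$ (a,b) = (\<Sum>l<n. H $$ (a,l) * ((if l = b then 1 else 0) + (if l = k then fls_star (c b) else 0)))"
    by (subst mult_entry[OF H _ a b]) (use b lr in \<open>auto simp: colop_index star_add intro!: sum.cong\<close>)
  also have "\<dots> = (\<Sum>l<n. (if l = b then H $$ (a,l) else 0)) + (\<Sum>l<n. (if l = k then H $$ (a,l) * fls_star (c b) else 0))"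
    by (subst sum.distrib[symmetric]) (auto simp: distrib_left intro!: sum.cong)
  also have "\<dots> = H $$ (a,b) + H $$ (a,k) * fls_star (c b)"
    using b k by simp
  finally show ?thesis .
qed

lemma rowop_inv:
  assumes k: "k < n" and rk: "r k = 0"
  shows "rowop n k (\<lambda>b. - r b) * rowop n k r = 1\<^sub>m n"
proof (rule eq_matI)
  fix a b assume "a < dim_row (1\<^sub>m n)" "b < dim_col (1\<^sub>m n)"
  then have a: "a < n" and b: "b < n" by auto
  have "(rowop n k (\<lambda>b. - r b) * rowop n k r) $$ (a,b) = rowop n k r $$ (a,b) + (if a = k then (\<Sum>l<n. - r l * rowop n k r $$ (l,b)) else 0)"
    by (rule rowop_mult_entry[OF rowop_carrier a b])
  also have "(\<Sum>l<n. - r l * rowop n k r $$ (l,b)) = (\<Sum>l<n. (if l = b then - r l else 0) + (if l = k then - r l * r b else 0))"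
    by (rule sum.cong) (use b in \<open>auto simp: rowop_index distrib_left\<close>)
  also have "\<dots> = - r b"
    using b k rk by (simp add: sum.distrib)
  finally show "(rowop n k (\<lambda>b. - r b) * rowop n k r) $$ (a,b) = 1\<^sub>m n $$ (a,b)"
    using a b by (simp add: rowop_index)
qed auto

lemma colop_inv:
  assumes k: "k < n" and ck: "c k = 0"
  shows "colop n k (\<lambda>b. - c b) * colop n k c = 1\<^sub>m n"
proof (rule eq_matI)
  fix a b assume "a < dim_row (1\<^sub>m n)" "b < dim_col (1\<^sub>m n)"
  then have a: "a < n" and b: "b < n" by auto
  show "(colop n k (\<lambda>b. - c b) * colop n k c) $$ (a,b) = 1\<^sub>m n $$ (a,b)"
    by (subst colop_mult_entry[OF colop_carrier a b k]) (use a b k ck in \<open>simp add: colop_index\<close>)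
qed auto

lemma permat_inv:
  assumes p: "p permutes {..<n}"
  shows "permat n p * mat_star (permat n p) = 1\<^sub>m n"
proof (rule eq_matI)
  fix a b assume "a < dim_row (1\<^sub>m n)" "b < dim_col (1\<^sub>m n)"
  then have a: "a < n" and b: "b < n" by auto
  have pa1: "p a < n" using permutes_in_image[OF p, of a] a by simp
  have pa2: "p b < n" using permutes_in_image[OF p, of b] b by simp
  note pa = pa1 pa2
  have "(permat n p * mat_star (permat n p)) $$ (a,b) = (\<Sum>l<n. permat n p $$ (a,l) * fls_star (permat n p $$ (b,l)))"
    by (subst mult_entry[OF permat_carrier _ a b]) (use a b in auto)
  also have "\<dots> = (\<Sum>l<n. (if l = p a then (if l = p b then 1 else 0) else 0))"
    by (rule sum.cong) (use a b in \<open>auto simp: permat_index\<close>)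
  also have "\<dots> = (if p a = p b then 1 else 0)" using pa by simp
  also have "\<dots> = 1\<^sub>m n $$ (a,b)" using a b p by (auto simp: permutes_inj[THEN injD])
  finally show "(permat n p * mat_star (permat n p)) $$ (a,b) = 1\<^sub>m n $$ (a,b)" .
qed auto

lemma permat_conj_entry:
  assumes p: "p permutes {..<n}" and H: "H \<in> carrier_mat n n" and a: "a < n" and b: "b < n"
  shows "(permat n p * H * mat_star (permat n p)) $$ (a,b) = H $$ (p a, p b)"
proof -
  have pa1: "p a < n" using permutes_in_image[OF p, of a] a by simp
  have pa2: "p b < n" using permutes_in_image[OF p, of b] b by simp
  note pa = pa1 pa2
  have "(permat n p * H * mat_star (permat n p)) $$ (a,b) = (\<Sum>l<n. (permat n p * H) $$ (a,l) * fls_star (permat n p $$ (b,l)))"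
    by (subst mult_entry[of _ n n _ n]) (use a b H in auto)
  also have "\<dots> = (\<Sum>l<n. if l = p b then (permat n p * H) $$ (a,l) else 0)"
    by (rule sum.cong) (use a b in \<open>auto simp: permat_index\<close>)
  also have "\<dots> = (permat n p * H) $$ (a, p b)" using pa by simp
  also have "\<dots> = (\<Sum>l<n. permat n p $$ (a,l) * H $$ (l, p b))"
    by (rule mult_entry[OF permat_carrier H a pa(2)])
  also have "\<dots> = (\<Sum>l<n. if l = p a then H $$ (l, p b) else 0)"
    by (rule sum.cong) (use a in \<open>auto simp: permat_index\<close>)
  also have "\<dots> = H $$ (p a, p b)" using pa by simp
  finally show ?thesis .
qed

lemma det_rowop:
  assumes k: "k < n" and rk: "r k = 0"
  shows "det (rowop n k r) = 1"
proof -
  let ?R = "rowop n k r"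
  let ?S = "{p. p permutes {0..<n}}"
  have z: "(\<Prod>i = 0..<n. ?R $$ (i, p i)) = 0" if p: "p \<in> ?S - {id}" for p
  proof -
    from p have pp: "p permutes {0..<n}" and pid: "p \<noteq> id" by auto
    obtain j where j: "p j \<noteq> j" using pid by (auto simp: fun_eq_iff)
    then have jn: "j < n" using pp by (meson atLeastLessThan_iff permutes_not_in zero_le)
    have "\<exists>i. i < n \<and> i \<noteq> k \<and> p i \<noteq> i"
    proof (cases "j = k")
      case False then show ?thesis using j jn by blast
    next
      case True
      let ?i = "p k"
      have "?i < n" using pp jn True by (simp add: permutes_in_image)
      moreover have "?i \<noteq> k" using j True by simp
      moreover have "p ?i \<noteq> ?i"
      proof
        assume "p ?i = ?i"
        then have "p ?i = p k" by simp
        then have "?i = k" using permutes_inj[OF pp] by (auto dest: injD)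
        with \<open>?i \<noteq> k\<close> show False by simp
      qed
      ultimately show ?thesis by blast
    qed
    then obtain i where i: "i < n" "i \<noteq> k" "p i \<noteq> i" by blast
    have "p i < n" using pp i by (simp add: permutes_in_image)
    then have "?R $$ (i, p i) = 0" using i by (simp add: rowop_index)
    then show ?thesis using i by (intro prod_zero) auto
  qed
  have "det ?R = (\<Sum>p\<in>?S. signof p * (\<Prod>i = 0..<n. ?R $$ (i, p i)))"
    by (rule det_def') simp
  also have "\<dots> = (\<Sum>p\<in>{id}. signof p * (\<Prod>i = 0..<n. ?R $$ (i, p i)))"
    by (rule sum.mono_neutral_right) (auto simp: z permutes_id finite_permutations)
  also have "\<dots> = 1"
  proof -
    have "\<And>i. (if i = k then r i else 0) = 0" using rk by auto
    then show ?thesis by (simp add: rowop_index)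
  qed
  finally show ?thesis .
qed

lemma det_colop:
  assumes k: "k < n" and ck: "c k = 0"
  shows "det (colop n k c) = 1"
proof -
  have "colop n k c = transpose_mat (rowop n k c)"
    by (rule eq_matI) (auto simp: rowop_index colop_index)
  then show ?thesis using det_transpose[of "rowop n k c" n] det_rowop[OF k, of c] ck by simp
qed

definition ext :: "complex fls \<Rightarrow> complex fls mat \<Rightarrow> complex fls mat" where
  "ext d M = mat (Suc (dim_row M)) (Suc (dim_col M)) (\<lambda>(a,b). if a = 0 \<and> b = 0 then d else if a = 0 \<or> b = 0 then 0 else M $$ (a - 1, b - 1))"

lemma ext_carrier[simp]: "M \<in> carrier_mat n m \<Longrightarrow> ext d M \<in> carrier_mat (Suc n) (Suc m)"
  unfolding ext_def by auto

lemma ext_dims[simp]: "dim_row (ext d M) = Suc (dim_row M)" "dim_col (ext d M) = Suc (dim_col M)"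
  unfolding ext_def by auto

lemma ext_index: "a < Suc (dim_row M) \<Longrightarrow> b < Suc (dim_col M) \<Longrightarrow> ext d M $$ (a,b) = (if a = 0 \<and> b = 0 then d else if a = 0 \<or> b = 0 then 0 else M $$ (a - 1, b - 1))"
  unfolding ext_def by simp

lemma lpm_ext[simp]: "is_laurent_poly d \<Longrightarrow> laurent_poly_mat M \<Longrightarrow> laurent_poly_mat (ext d M)"
  unfolding ext_def by (rule lpm_mat) (auto intro: lpm_index)

lemma star_ext: "mat_star (ext d M) = ext (fls_star d) (mat_star M)"
  by (rule eq_matI) (auto simp: ext_index)

lemma ext_mult:
  assumes M: "M \<in> carrier_mat n m" and N: "N \<in> carrier_mat m p"
  shows "ext a M * ext b N = ext (a * b) (M * N)"
proof (rule eq_matI)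
  fix i j assume "i < dim_row (ext (a * b) (M * N))" "j < dim_col (ext (a * b) (M * N))"
  then have i: "i < Suc n" and j: "j < Suc p" using M N by auto
  have "(ext a M * ext b N) $$ (i,j) = (\<Sum>l<Suc m. ext a M $$ (i,l) * ext b N $$ (l,j))"
    by (rule mult_entry[OF ext_carrier[OF M] ext_carrier[OF N] i j])
  also have "\<dots> = ext a M $$ (i,0) * ext b N $$ (0,j) + (\<Sum>l<m. ext a M $$ (i,Suc l) * ext b N $$ (Suc l,j))"
    by (subst sum.lessThan_Suc_shift) simp
  also have "\<dots> = ext (a * b) (M * N) $$ (i,j)"
  proof (cases "i = 0 \<or> j = 0")
    case True then show ?thesis using i j M N by (auto simp: ext_index)
  next
    case False
    then obtain i' j' where ij: "i = Suc i'" "j = Suc j'" by (cases i; cases j) auto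
    then have i': "i' < n" and j': "j' < p" using i j by auto
    show ?thesis using ij M N i' j' by (auto simp: ext_index mult_entry[OF M N i' j'])
  qed
  finally show "(ext a M * ext b N) $$ (i,j) = ext (a * b) (M * N) $$ (i,j)" .
qed (use M N in auto)

lemma det_ext:
  assumes M: "M \<in> carrier_mat n n"
  shows "det (ext d M) = d * det M"
proof -
  have e: "ext d M = four_block_mat (mat 1 1 (\<lambda>_. d)) (0\<^sub>m 1 n) (0\<^sub>m n 1) M"
    by (rule eq_matI) (use M in \<open>auto simp: ext_index\<close>)
  have "det (ext d M) = det (mat 1 1 (\<lambda>_. d)) * det M"
    unfolding e by (rule det_four_block_mat_lower_left_zero_col) (use M in auto)
  also have "det (mat 1 1 (\<lambda>_. d)) = d" by (subst det_single) auto
  finally show ?thesis .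
qed




definition good :: "nat \<Rightarrow> complex fls mat \<Rightarrow> bool" where
  "good n H \<longleftrightarrow> (\<exists>p m U. p + m = n \<and> U \<in> carrier_mat n n \<and> laurent_poly_mat U \<and>
           H = U * signature_mat p m * mat_star U)"

definition herm :: "nat \<Rightarrow> complex fls mat \<Rightarrow> bool" where
  "herm n H \<longleftrightarrow> H \<in> carrier_mat n n \<and> laurent_poly_mat H \<and> mat_star H = H"

lemma sig_carrier[simp]: "signature_mat p m \<in> carrier_mat (p + m) (p + m)"
  unfolding signature_mat_def by simp

lemma sig_dims[simp]: "dim_row (signature_mat p m) = p + m" "dim_col (signature_mat p m) = p + m"
  unfolding signature_mat_def by auto

lemma sig_index: "a < p + m \<Longrightarrow> b < p + m \<Longrightarrow> signature_mat p m $$ (a,b) = (if a = b then (if a < p then 1 else - 1) else 0)"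
  unfolding signature_mat_def by simp

lemma lpm_sig[simp]: "laurent_poly_mat (signature_mat p m)"
  unfolding signature_mat_def by (rule lpm_mat) auto

lemma herm_entry: "herm n H \<Longrightarrow> a < n \<Longrightarrow> b < n \<Longrightarrow> fls_star (H $$ (b,a)) = H $$ (a,b)"
  unfolding herm_def by (metis carrier_matD(1,2) mat_star_index)

lemma herm_lp: "herm n H \<Longrightarrow> a < n \<Longrightarrow> b < n \<Longrightarrow> is_laurent_poly (H $$ (a,b))"
  unfolding herm_def by (auto intro: lpm_index)

lemma cong_good:
  assumes H: "H \<in> carrier_mat n n" and W: "W \<in> carrier_mat n n" and V: "V \<in> carrier_mat n n"
    and lW: "laurent_poly_mat W" and lV: "laurent_poly_mat V" and VW: "V * W = 1\<^sub>m n"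
    and g: "good n (W * H * mat_star W)"
  shows "good n H"
proof -
  obtain p m U where pm: "p + m = n" and U: "U \<in> carrier_mat n n" and lU: "laurent_poly_mat U"
    and e: "W * H * mat_star W = U * signature_mat p m * mat_star U"
    using g unfolding good_def by blast
  have J: "signature_mat p m \<in> carrier_mat n n" using pm sig_carrier by blast
  have sVW: "mat_star W * mat_star V = 1\<^sub>m n"
    using star_mult_mat[OF V W lV lW] VW by simp
  have sW: "mat_star W \<in> carrier_mat n n" and sV: "mat_star V \<in> carrier_mat n n" and sU: "mat_star U \<in> carrier_mat n n"
    using W V U by auto
  have "H = (V * W) * H * (mat_star W * mat_star V)" using H by (simp add: VW sVW)
  also have "\<dots> = V * (W * H * mat_star W) * mat_star V"
    using V W H sW sV by (simp add: assoc_mult_mat[of _ n n _ n _ n] mult_carrier_mat[of _ n n _ n])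
  also have "\<dots> = V * (U * signature_mat p m * mat_star U) * mat_star V" using e by simp
  also have "\<dots> = (V * U) * signature_mat p m * (mat_star U * mat_star V)"
    using V U J sU sV by (simp add: assoc_mult_mat[of _ n n _ n _ n] mult_carrier_mat[of _ n n _ n])
  also have "mat_star U * mat_star V = mat_star (V * U)" using star_mult_mat[OF V U lV lU] by simp
  finally have fin: "H = V * U * signature_mat p m * mat_star (V * U)" .
  show ?thesis unfolding good_def
    by (rule exI[of _ p], rule exI[of _ m], rule exI[of _ "V * U"]) (use fin pm V U lV lU in auto)
qed

lemma herm_cong:
  assumes H: "herm n H" and W: "W \<in> carrier_mat n n" and lW: "laurent_poly_mat W"
  shows "herm n (W * H * mat_star W)"
proof -
  have Hc: "H \<in> carrier_mat n n" and lH: "laurent_poly_mat H" and sH: "mat_star H = H" using H unfolding herm_def by auto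
  have sW: "mat_star W \<in> carrier_mat n n" using W by simp
  have "mat_star (W * H * mat_star W) = mat_star (mat_star W) * mat_star (W * H)"
    by (rule star_mult_mat[of _ n n _ n]) (use W Hc lW lH in auto)
  also have "mat_star (W * H) = mat_star H * mat_star W" by (rule star_mult_mat[OF W Hc lW lH])
  finally have "mat_star (W * H * mat_star W) = W * (H * mat_star W)" using lW sH by simp
  also have "\<dots> = W * H * mat_star W" using W Hc sW by (simp add: assoc_mult_mat[of _ n n _ n _ n] mult_carrier_mat[of _ n n _ n])
  finally show ?thesis unfolding herm_def using W Hc lW lH by auto
qed

lemma det_cong:
  assumes H: "H \<in> carrier_mat n n" and W: "W \<in> carrier_mat n n"
  shows "det (W * H * mat_star W) = det W * det H * det (mat_star W)"
  using H W by (simp add: det_mult[of _ n])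

lemma ext_sig_pos: "ext 1 (signature_mat p m) = signature_mat (Suc p) m"
  by (rule eq_matI) (auto simp: ext_index sig_index)

definition sigperm :: "nat \<Rightarrow> nat \<Rightarrow> nat" where
  "sigperm p a = (if a < p then Suc a else if a = p then 0 else a)"

lemma sigperm_permutes: "sigperm p permutes {..<Suc (p + m)}"
proof (rule bij_imp_permutes)
  let ?g = "\<lambda>b. if b = 0 then p else if b \<le> p then b - 1 else b"
  show "bij_betw (sigperm p) {..<Suc (p + m)} {..<Suc (p + m)}"
    by (rule bij_betw_byWitness[of _ ?g]) (auto simp: sigperm_def)
  show "\<And>x. x \<notin> {..<Suc (p + m)} \<Longrightarrow> sigperm p x = x" by (auto simp: sigperm_def)
qed

lemma ext_sig_neg:
  fixes p m :: nat
  defines "P \<equiv> permat (Suc (p + m)) (sigperm p)"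
  shows "ext (-1) (signature_mat p m) = mat_star P * signature_mat p (Suc m) * P"
proof -
  let ?N = "Suc (p + m)"
  let ?M = "ext (-1) (signature_mat p m)"
  have M: "?M \<in> carrier_mat ?N ?N" by (rule ext_carrier) simp
  have P: "P \<in> carrier_mat ?N ?N" unfolding P_def by simp
  have sP: "mat_star P \<in> carrier_mat ?N ?N" using P by simp
  have PP: "P * mat_star P = 1\<^sub>m ?N" unfolding P_def by (rule permat_inv[OF sigperm_permutes])
  have PP': "mat_star P * P = 1\<^sub>m ?N" by (rule mat_mult_left_right_inverse[OF P sP PP])
  have conj: "P * ?M * mat_star P = signature_mat p (Suc m)"
  proof (rule eq_matI)
    fix a b assume "a < dim_row (signature_mat p (Suc m))" "b < dim_col (signature_mat p (Suc m))"
    then have a: "a < ?N" and b: "b < ?N" by (auto simp: signature_mat_def)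
    have sa: "sigperm p a < ?N" "sigperm p b < ?N" using a b by (auto simp: sigperm_def)
    have "(P * ?M * mat_star P) $$ (a,b) = ?M $$ (sigperm p a, sigperm p b)"
      unfolding P_def by (rule permat_conj_entry[OF sigperm_permutes M]) (use a b in auto)
    also have "\<dots> = signature_mat p (Suc m) $$ (a,b)"
      using a b sa by (auto simp: ext_index sig_index sigperm_def signature_mat_def)
    finally show "(P * ?M * mat_star P) $$ (a,b) = signature_mat p (Suc m) $$ (a,b)" .
  qed (use P in \<open>auto simp: signature_mat_def\<close>)
  have "?M = (mat_star P * P) * ?M * (mat_star P * P)" using M by (simp add: PP')
  also have "\<dots> = mat_star P * (P * ?M * mat_star P) * P"
    using P sP M by (simp add: assoc_mult_mat[of _ ?N ?N _ ?N _ ?N] mult_carrier_mat[of _ ?N ?N _ ?N])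
  also have "\<dots> = mat_star P * signature_mat p (Suc m) * P" by (simp add: conj)
  finally show ?thesis .
qed

lemma good_ext:
  assumes g: "good n R" and R: "R \<in> carrier_mat n n" and d: "d \<noteq> 0" "cnj d = d"
  shows "good (Suc n) (ext (fls_const d) R)"
proof -
  obtain p m U where pm: "p + m = n" and U: "U \<in> carrier_mat n n" and lU: "laurent_poly_mat U"
    and e: "R = U * signature_mat p m * mat_star U"
    using g unfolding good_def by blast
  define r where "r = Re d"
  have dr: "d = complex_of_real r" using d(2) unfolding r_def by (metis Reals_cnj_iff complex_is_Real_iff of_real_Re)
  have r0: "r \<noteq> 0" using d dr by auto
  define q where "q = fls_const (complex_of_real (sqrt \<bar>r\<bar>))"
  define s where "s = fls_const (if r > 0 then 1 else - 1 :: complex)"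
  have sq: "q * s * fls_star q = fls_const d"
    unfolding q_def s_def dr using r0
    by (auto simp: real_sqrt_mult[symmetric] simp flip: of_real_mult)
  let ?J = "signature_mat p m"
  have J: "?J \<in> carrier_mat n n" using pm sig_carrier by blast
  have eU: "ext q U \<in> carrier_mat (Suc n) (Suc n)" using U by simp
  have lq: "is_laurent_poly q" unfolding q_def by simp
  have main: "ext (fls_const d) R = ext q U * ext s ?J * mat_star (ext q U)"
  proof -
    have "ext q U * ext s ?J * mat_star (ext q U) = ext (q * s) (U * ?J) * ext (fls_star q) (mat_star U)"
      by (simp add: ext_mult[OF U J] star_ext)
    also have "\<dots> = ext (q * s * fls_star q) (U * ?J * mat_star U)"
      by (rule ext_mult[of _ n n _ n]) (use U J in auto)
    finally show ?thesis using sq e by simp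
  qed
  show ?thesis
  proof (cases "r > 0")
    case True
    then have "ext s ?J = signature_mat (Suc p) m" unfolding s_def by (simp add: ext_sig_pos)
    then have es: "ext s ?J = signature_mat (Suc p) m" .
    show ?thesis unfolding good_def
      by (rule exI[of _ "Suc p"], rule exI[of _ m], rule exI[of _ "ext q U"]) (use es main pm eU lU lq in auto)
  next
    case False
    define P where "P = permat (Suc (p + m)) (sigperm p)"
    have es: "ext s ?J = mat_star P * signature_mat p (Suc m) * P"
      using False unfolding s_def P_def by (simp add: ext_sig_neg)
    have P: "P \<in> carrier_mat (Suc n) (Suc n)" unfolding P_def using pm by simp
    have sP: "mat_star P \<in> carrier_mat (Suc n) (Suc n)" using P by simp
    have J': "signature_mat p (Suc m) \<in> carrier_mat (Suc n) (Suc n)" using pm sig_carrier[of p "Suc m"] by simp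
    have seU: "mat_star (ext q U) \<in> carrier_mat (Suc n) (Suc n)" using eU by simp
    have lP: "laurent_poly_mat P" unfolding P_def by simp
    have "ext (fls_const d) R = ext q U * (mat_star P * signature_mat p (Suc m) * P) * mat_star (ext q U)"
      using main es by simp
    also have "\<dots> = (ext q U * mat_star P) * signature_mat p (Suc m) * (P * mat_star (ext q U))"
      using eU sP J' P seU by (simp add: assoc_mult_mat[of _ "Suc n" "Suc n" _ "Suc n" _ "Suc n"] mult_carrier_mat[of _ "Suc n" "Suc n" _ "Suc n"])
    also have "P * mat_star (ext q U) = mat_star (ext q U * mat_star P)"
      using star_mult_mat[OF eU sP] lU lq lP by simp
    finally have fin: "ext (fls_const d) R = ext q U * mat_star P * signature_mat p (Suc m) * mat_star (ext q U * mat_star P)" .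
    have lE: "laurent_poly_mat (ext q U * mat_star P)" by (rule lpm_mult) (use eU sP lU lq lP U P in auto)
    have cE: "ext q U * mat_star P \<in> carrier_mat (Suc n) (Suc n)" using eU sP by simp
    show ?thesis unfolding good_def
      by (rule exI[of _ p], rule exI[of _ "Suc m"], rule exI[of _ "ext q U * mat_star P"]) (use pm fin lE cE in auto)
  qed
qed




lemma herm_carrier: "herm n H \<Longrightarrow> H \<in> carrier_mat n n" unfolding herm_def by auto
lemma herm_lpm: "herm n H \<Longrightarrow> laurent_poly_mat H" unfolding herm_def by auto

lemma star_det_one: "W \<in> carrier_mat n n \<Longrightarrow> laurent_poly_mat W \<Longrightarrow> det W = 1 \<Longrightarrow> det (mat_star W) = 1"
  by (simp add: det_star)

lemma split_good:
  assumes IH: "\<And>H c. herm n H \<Longrightarrow> c \<noteq> 0 \<Longrightarrow> det H = fls_const c \<Longrightarrow> good n H"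
    and H: "herm (Suc n) H" and c: "c \<noteq> 0" and dH: "det H = fls_const c"
    and i: "i < Suc n" and Hii: "H $$ (i,i) = fls_const d" and d: "d \<noteq> 0" "cnj d = d"
  shows "good (Suc n) H"
proof -
  let ?N = "Suc n"
  define pi where "pi = Transposition.transpose 0 i"
  have pp: "pi permutes {..<?N}" unfolding pi_def by (rule permutes_swap_id) (use i in auto)
  define P where "P = permat ?N pi"
  have Hc: "H \<in> carrier_mat ?N ?N" using H by (rule herm_carrier)
  have P: "P \<in> carrier_mat ?N ?N" unfolding P_def by simp
  have sP: "mat_star P \<in> carrier_mat ?N ?N" using P by simp
  have lP: "laurent_poly_mat P" unfolding P_def by simp
  have PP: "P * mat_star P = 1\<^sub>m ?N" unfolding P_def by (rule permat_inv[OF pp])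
  have PP': "mat_star P * P = 1\<^sub>m ?N" by (rule mat_mult_left_right_inverse[OF P sP PP])
  define G where "G = P * H * mat_star P"
  have hG: "herm ?N G" unfolding G_def by (rule herm_cong[OF H P lP])
  have Gc: "G \<in> carrier_mat ?N ?N" using hG by (rule herm_carrier)
  have dG: "det G = fls_const c"
  proof -
    have "det G = det P * det H * det (mat_star P)" unfolding G_def by (rule det_cong[OF Hc P])
    also have "\<dots> = det H * det (P * mat_star P)" using P sP by (simp add: det_mult[of _ ?N])
    finally show ?thesis using PP dH by simp
  qed
  have G00: "G $$ (0,0) = fls_const d"
    unfolding G_def P_def using permat_conj_entry[OF pp Hc, of 0 0] Hii by (simp add: pi_def)
  have gGH: "good ?N G \<Longrightarrow> good ?N H"
    by (rule cong_good[OF Hc P sP lP _ PP']) (simp_all add: G_def lP)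
  have lG: "\<And>a b. a < ?N \<Longrightarrow> b < ?N \<Longrightarrow> is_laurent_poly (G $$ (a,b))" using hG by (rule herm_lp)
  define cc where "cc l = (if l = 0 then 0 else - (G $$ (l,0)) * fls_const (inverse d))" for l
  have cc0: "cc 0 = 0" unfolding cc_def by simp
  have lcc: "\<And>l. l < ?N \<Longrightarrow> is_laurent_poly (cc l)" unfolding cc_def using lG by auto
  define W where "W = colop ?N 0 cc"
  have W: "W \<in> carrier_mat ?N ?N" unfolding W_def by simp
  have lW: "laurent_poly_mat W" unfolding W_def using lcc by simp
  define V where "V = colop ?N 0 (\<lambda>l. - cc l)"
  have V: "V \<in> carrier_mat ?N ?N" unfolding V_def by simp
  have lV: "laurent_poly_mat V" unfolding V_def using lcc by simp
  have VW: "V * W = 1\<^sub>m ?N" unfolding V_def W_def by (rule colop_inv) (auto simp: cc_def)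
  define G' where "G' = W * G * mat_star W"
  have gG'G: "good ?N G' \<Longrightarrow> good ?N G"
    unfolding G'_def by (rule cong_good[OF Gc W V lW lV VW])
  have hG': "herm ?N G'" unfolding G'_def by (rule herm_cong[OF hG W lW])
  have dW: "det W = 1" unfolding W_def by (rule det_colop) (auto simp: cc_def)
  have dG': "det G' = fls_const c"
    unfolding G'_def using det_cong[OF Gc W] dW star_det_one[OF W lW dW] dG by simp
  have WG: "W * G \<in> carrier_mat ?N ?N" using W Gc by simp
  have WGe: "(W * G) $$ (a,b) = G $$ (a,b) + cc a * G $$ (0,b)" if "a < ?N" "b < ?N" for a b
    unfolding W_def by (rule colop_mult_entry[OF Gc that]) simp
  have G'e: "G' $$ (a,b) = (W * G) $$ (a,b) + (W * G) $$ (a,0) * fls_star (cc b)" if "a < ?N" "b < ?N" for a b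
    unfolding G'_def W_def by (rule mult_star_colop_entry[OF WG[unfolded W_def] that]) (use lcc in auto)
  have sd: "fls_star (fls_const (inverse d)) = fls_const (inverse d)" using d by simp
  have WGa0: "(W * G) $$ (a,0) = 0" if "a < ?N" "a \<noteq> 0" for a
  proof -
    have "(W * G) $$ (a,0) = G $$ (a,0) - G $$ (a,0) * (fls_const (inverse d) * fls_const d)"
      using that by (simp add: WGe cc_def G00 algebra_simps)
    also have "fls_const (inverse d) * fls_const d = 1" using d by simp
    finally show ?thesis by simp
  qed
  have G'00: "G' $$ (0,0) = fls_const d" by (simp add: G'e WGe cc_def G00)
  have G'a0: "G' $$ (a,0) = 0" if "a < ?N" "a \<noteq> 0" for a
    using that by (simp add: G'e WGa0 cc_def)
  have G'0b: "G' $$ (0,b) = 0" if "b < ?N" "b \<noteq> 0" for b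
  proof -
    have st: "fls_star (cc b) = - G $$ (0,b) * fls_const (inverse d)"
      using that lG[of b 0] herm_entry[OF hG, of 0 b] d(2) by (simp add: cc_def star_mult star_uminus)
    have "G' $$ (0,b) = G $$ (0,b) - G $$ (0,b) * (fls_const (inverse d) * fls_const d)"
      using that by (simp add: G'e WGe cc0 G00 st algebra_simps)
    also have "fls_const (inverse d) * fls_const d = 1" using d by simp
    finally show ?thesis by simp
  qed
  define R where "R = mat n n (\<lambda>(a,b). G' $$ (Suc a, Suc b))"
  have Rc: "R \<in> carrier_mat n n" unfolding R_def by simp
  have G'c: "G' \<in> carrier_mat ?N ?N" using hG' by (rule herm_carrier)
  have G'ext: "G' = ext (fls_const d) R"
  proof (rule eq_matI)
    fix a b assume "a < dim_row (ext (fls_const d) R)" "b < dim_col (ext (fls_const d) R)"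
    then have a: "a < ?N" and b: "b < ?N" using Rc by auto
    show "G' $$ (a,b) = ext (fls_const d) R $$ (a,b)"
    proof (cases "a = 0 \<or> b = 0")
      case True then show ?thesis using a b Rc G'00 G'a0 G'0b by (auto simp: ext_index)
    next
      case False
      then obtain a' b' where "a = Suc a'" "b = Suc b'" by (cases a; cases b) auto
      then show ?thesis using a b Rc by (auto simp: ext_index R_def)
    qed
  qed (use G'c Rc in auto)
  have hR: "herm n R"
  proof -
    have lR: "laurent_poly_mat R" unfolding R_def by (rule lpm_mat) (auto intro: herm_lp[OF hG'])
    have "mat_star R = R"
      by (rule eq_matI) (use Rc in \<open>auto simp: R_def herm_entry[OF hG']\<close>)
    then show ?thesis unfolding herm_def using Rc lR by auto
  qed
  have "det G' = fls_const d * det R" unfolding G'ext by (rule det_ext[OF Rc])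
  then have "fls_const (inverse d) * fls_const c = (fls_const (inverse d) * fls_const d) * det R"
    using dG' by (simp add: mult.assoc)
  then have dR: "det R = fls_const (inverse d * c)" using d by simp
  have "good n R" by (rule IH[OF hR _ dR]) (use c d in simp)
  then have "good ?N (ext (fls_const d) R)" by (rule good_ext[OF _ Rc d])
  then show ?thesis using gGH gG'G G'ext by simp
qed




lemma rowop_step:
  assumes H: "herm N H" and k: "k < N" and rk: "r k = 0" and lr: "\<And>l. l < N \<Longrightarrow> is_laurent_poly (r l)"
  shows "herm N (rowop N k r * H * mat_star (rowop N k r))"
    "det (rowop N k r * H * mat_star (rowop N k r)) = det H"
    "good N (rowop N k r * H * mat_star (rowop N k r)) \<Longrightarrow> good N H"
proof -
  have W: "rowop N k r \<in> carrier_mat N N" by simp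
  have lW: "laurent_poly_mat (rowop N k r)" using lr by simp
  have Hc: "H \<in> carrier_mat N N" using H by (rule herm_carrier)
  show "herm N (rowop N k r * H * mat_star (rowop N k r))" by (rule herm_cong[OF H W lW])
  have dW: "det (rowop N k r) = 1" by (rule det_rowop[of k N r, OF k rk])
  show "det (rowop N k r * H * mat_star (rowop N k r)) = det H"
    using det_cong[OF Hc W] dW star_det_one[OF W lW dW] by simp
  have lV: "laurent_poly_mat (rowop N k (\<lambda>b. - r b))" using lr by simp
  show "good N (rowop N k r * H * mat_star (rowop N k r)) \<Longrightarrow> good N H"
    by (rule cong_good[OF Hc W rowop_carrier lW lV rowop_inv[of k N r, OF k rk]])
qed

lemma rowop_conj_entry:
  assumes H: "H \<in> carrier_mat N N" and a: "a < N" and b: "b < N" and lr: "\<And>l. l < N \<Longrightarrow> is_laurent_poly (r l)"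
  shows "(rowop N k r * H * mat_star (rowop N k r)) $$ (a,b) =
     (rowop N k r * H) $$ (a,b) + (if b = k then (\<Sum>l<N. (rowop N k r * H) $$ (a,l) * fls_star (r l)) else 0)"
proof -
  have c: "rowop N k r * H \<in> carrier_mat N N" by (rule mult_carrier_mat[of _ N N]) (use H in auto)
  show ?thesis by (rule mult_star_rowop_entry[OF c a b lr])
qed

lemma lp_shift[simp]: assumes "is_laurent_poly f" shows "is_laurent_poly (fls_shift k f)"
proof -
  obtain N where N: "\<And>j. N < \<bar>j\<bar> \<Longrightarrow> fls_nth f j = 0" using lp_boundE[OF assms] by blast
  show ?thesis by (rule lp_boundI[of "N + \<bar>k\<bar>"]) (simp add: N)
qed

lemma sum_single1: "(i::nat) < N \<Longrightarrow> (\<Sum>l<N. (if l = i then x else 0) * f l) = x * (f i :: complex fls)"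
proof -
  assume i: "i < N"
  have "(\<Sum>l<N. (if l = i then x else 0) * f l) = (\<Sum>l<N. if l = i then x * f i else 0)" by (rule sum.cong) auto
  also have "\<dots> = (if i \<in> {..<N} then x * f i else 0)" by (rule sum.delta) simp
  finally show ?thesis using i by simp
qed

lemma sum_single2: "(i::nat) < N \<Longrightarrow> (\<Sum>l<N. f l * fls_star (if l = i then x else 0)) = (f i :: complex fls) * fls_star x"
proof -
  assume i: "i < N"
  have "(\<Sum>l<N. f l * fls_star (if l = i then x else 0)) = (\<Sum>l<N. if l = i then f i * fls_star x else 0)" by (rule sum.cong) auto
  also have "\<dots> = (if i \<in> {..<N} then f i * fls_star x else 0)" by (rule sum.delta) simp
  finally show ?thesis using i by simp
qed

definition hpart :: "complex fls \<Rightarrow> complex fls" where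
  "hpart e = Abs_fls (\<lambda>k. if k > 0 then fls_nth e k else if k = 0 then fls_nth e 0 / 2 else 0)"

lemma hpart_nth: "fls_nth (hpart e) k = (if k > 0 then fls_nth e k else if k = 0 then fls_nth e 0 / 2 else 0)"
  unfolding hpart_def by (rule nth_Abs_fls_lower_bound[of 0]) auto

lemma lp_hpart[simp]: assumes "is_laurent_poly e" shows "is_laurent_poly (hpart e)"
proof -
  obtain N where N: "\<And>k. N < \<bar>k\<bar> \<Longrightarrow> fls_nth e k = 0" using lp_boundE[OF assms] by blast
  show ?thesis by (rule lp_boundI[of N]) (simp add: hpart_nth N)
qed

lemma hpart_herm:
  assumes l: "is_laurent_poly e" and h: "fls_star e = e"
  shows "hpart e + fls_star (hpart e) = e"
proof (rule fls_eqI)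
  fix k
  have ek: "fls_nth e k = cnj (fls_nth e (-k))" for k using h star_nth[OF l, of k] by simp
  show "fls_nth (hpart e + fls_star (hpart e)) k = fls_nth e k"
  proof (cases "k > 0")
    case True then show ?thesis by (simp add: star_nth l hpart_nth)
  next
    case False
    show ?thesis
    proof (cases "k = 0")
      case True
      have "fls_nth e 0 = cnj (fls_nth e 0)" using ek[of 0] by simp
      then have "cnj (fls_nth e 0 / 2) = fls_nth e 0 / 2" by simp
      then have "fls_nth e 0 / 2 + cnj (fls_nth e 0 / 2) = fls_nth e 0" by simp
      then show ?thesis using True by (simp add: star_nth l hpart_nth)
    next
      case False
      then show ?thesis using \<open>\<not> k > 0\<close> ek[of k] by (simp add: star_nth l hpart_nth)
    qed
  qed
qed

lemma pair_good:
  assumes split: "\<And>G i d. herm N G \<Longrightarrow> det G = det H \<Longrightarrow> i < N \<Longrightarrow> G $$ (i,i) = fls_const d \<Longrightarrow> d \<noteq> 0 \<Longrightarrow> cnj d = d \<Longrightarrow> good N G"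
    and H: "herm N H" and i: "i < N" and j: "j < N" and ij: "i \<noteq> j"
    and Hii: "H $$ (i,i) = 0" and Hij: "H $$ (i,j) = fls_const a * fls_X_intpow t" and a: "a \<noteq> 0"
  shows "good N H"
proof -
  have Hc: "H \<in> carrier_mat N N" using H by (rule herm_carrier)
  define u where "u = fls_const a * fls_X_intpow t"
  define uinv where "uinv = fls_const (inverse a) * fls_X_intpow (-t)"
  have uu: "uinv * u = 1"
  proof -
    have "uinv * u = (fls_const (inverse a) * fls_const a) * (fls_X_intpow (-t) * fls_X_intpow t)"
      unfolding u_def uinv_def by (simp only: mult_ac)
    also have "\<dots> = fls_const (inverse a * a) * fls_X_intpow (-t + t)"
      by (simp only: fls_const_mult_const fls_X_intpow_times_fls_X_intpow)
    also have "\<dots> = 1" using a by simp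
    finally show ?thesis .
  qed
  have lu: "is_laurent_poly u" unfolding u_def by simp
  have luinv: "is_laurent_poly uinv" unfolding uinv_def by simp
  define e where "e = H $$ (j,j)"
  have le: "is_laurent_poly e" unfolding e_def using herm_lp[OF H j j] .
  have se: "fls_star e = e" unfolding e_def using herm_entry[OF H j j] .
  define x where "x = - hpart e * uinv"
  have lx: "is_laurent_poly x" unfolding x_def using le luinv by simp
  have xu: "x * u = - hpart e" unfolding x_def using uu by (simp add: mult.assoc)
  define r1 where "r1 l = (if l = i then x else 0)" for l
  have lr1: "\<And>l. l < N \<Longrightarrow> is_laurent_poly (r1 l)" unfolding r1_def using lx by simp
  have r1j: "r1 j = 0" unfolding r1_def using ij by simp
  define W1 where "W1 = rowop N j r1"
  define H1 where "H1 = W1 * H * mat_star W1"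
  note st1 = rowop_step[of N H j r1, OF H j r1j lr1, folded W1_def, folded H1_def]
  have H1c: "H1 \<in> carrier_mat N N" using st1(1) by (rule herm_carrier)
  have sH: "\<And>p q. p < N \<Longrightarrow> q < N \<Longrightarrow> fls_star (H $$ (q,p)) = H $$ (p,q)" using herm_entry[OF H] by blast
  have WH1: "(W1 * H) $$ (p,q) = H $$ (p,q) + (if p = j then x * H $$ (i,q) else 0)" if "p < N" "q < N" for p q
  proof -
    have "(W1 * H) $$ (p,q) = H $$ (p,q) + (if p = j then (\<Sum>l<N. r1 l * H $$ (l,q)) else 0)"
      unfolding W1_def by (rule rowop_mult_entry[OF Hc that])
    also have "(\<Sum>l<N. r1 l * H $$ (l,q)) = x * H $$ (i,q)" unfolding r1_def by (rule sum_single1[OF i])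
    finally show ?thesis .
  qed
  have H1e: "H1 $$ (p,q) = (W1 * H) $$ (p,q) + (if q = j then (W1 * H) $$ (p,i) * fls_star x else 0)" if "p < N" "q < N" for p q
  proof -
    have "H1 $$ (p,q) = (W1 * H) $$ (p,q) + (if q = j then (\<Sum>l<N. (W1 * H) $$ (p,l) * fls_star (r1 l)) else 0)"
      unfolding H1_def W1_def by (rule rowop_conj_entry[OF Hc that lr1])
    also have "(\<Sum>l<N. (W1 * H) $$ (p,l) * fls_star (r1 l)) = (W1 * H) $$ (p,i) * fls_star x"
      unfolding r1_def by (rule sum_single2[OF i])
    finally show ?thesis .
  qed
  have H1ii: "H1 $$ (i,i) = 0" using i ij by (simp add: H1e WH1 Hii)
  have H1ij: "H1 $$ (i,j) = u" using i j ij by (simp add: H1e WH1 Hii Hij u_def)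
  have H1jj: "H1 $$ (j,j) = 0"
  proof -
    have Hji: "H $$ (j,i) = fls_star u" using sH[OF j i] Hij u_def by simp
    have "H1 $$ (j,j) = e + x * u + fls_star u * fls_star x"
      using i j ij by (simp add: H1e WH1 Hii Hij u_def e_def Hji algebra_simps)
    also have "fls_star u * fls_star x = fls_star (x * u)" using lx lu by (simp add: star_mult mult.commute)
    also have "\<dots> = - fls_star (hpart e)" using xu le by (simp add: star_uminus)
    finally have "H1 $$ (j,j) = e + x * u + - fls_star (hpart e)" .
    then have "H1 $$ (j,j) = e - (hpart e + fls_star (hpart e))" using xu by (simp add: algebra_simps)
    then show ?thesis using hpart_herm[OF le se] by simp
  qed
  have sH1: "\<And>p q. p < N \<Longrightarrow> q < N \<Longrightarrow> fls_star (H1 $$ (q,p)) = H1 $$ (p,q)" using herm_entry[OF st1(1)] by blast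
  have H1ji: "H1 $$ (j,i) = fls_star u" using sH1[OF j i] H1ij by simp
  define w where "w = fls_const (inverse (2 * cnj a)) * fls_X_intpow t"
  have lw: "is_laurent_poly w" unfolding w_def by simp
  have wsu: "w * fls_star u = fls_const (1/2)"
  proof -
    have su: "fls_star u = fls_const (cnj a) * fls_X_intpow (-t)"
      unfolding u_def by (simp only: star_mult lp_const lp_X_intpow star_const star_X_intpow)
    have "w * fls_star u = (fls_const (inverse (2 * cnj a)) * fls_const (cnj a)) * (fls_X_intpow t * fls_X_intpow (-t))"
      unfolding w_def su by (simp only: mult_ac)
    also have "\<dots> = fls_const (inverse (2 * cnj a) * cnj a) * fls_X_intpow (t + -t)"
      by (simp only: fls_const_mult_const fls_X_intpow_times_fls_X_intpow)
    also have "\<dots> = fls_const (1/2)" using a by (simp add: field_simps)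
    finally show ?thesis .
  qed
  define r2 where "r2 l = (if l = j then w else 0)" for l
  have lr2: "\<And>l. l < N \<Longrightarrow> is_laurent_poly (r2 l)" unfolding r2_def using lw by simp
  have r2i: "r2 i = 0" unfolding r2_def using ij by simp
  define W2 where "W2 = rowop N i r2"
  define H2 where "H2 = W2 * H1 * mat_star W2"
  note st2 = rowop_step[of N H1 i r2, OF st1(1) i r2i lr2, folded W2_def, folded H2_def]
  have WH2: "(W2 * H1) $$ (p,q) = H1 $$ (p,q) + (if p = i then w * H1 $$ (j,q) else 0)" if "p < N" "q < N" for p q
  proof -
    have "(W2 * H1) $$ (p,q) = H1 $$ (p,q) + (if p = i then (\<Sum>l<N. r2 l * H1 $$ (l,q)) else 0)"
      unfolding W2_def by (rule rowop_mult_entry[OF H1c that])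
    also have "(\<Sum>l<N. r2 l * H1 $$ (l,q)) = w * H1 $$ (j,q)" unfolding r2_def by (rule sum_single1[OF j])
    finally show ?thesis .
  qed
  have H2e: "H2 $$ (p,q) = (W2 * H1) $$ (p,q) + (if q = i then (W2 * H1) $$ (p,j) * fls_star w else 0)" if "p < N" "q < N" for p q
  proof -
    have "H2 $$ (p,q) = (W2 * H1) $$ (p,q) + (if q = i then (\<Sum>l<N. (W2 * H1) $$ (p,l) * fls_star (r2 l)) else 0)"
      unfolding H2_def W2_def by (rule rowop_conj_entry[OF H1c that lr2])
    also have "(\<Sum>l<N. (W2 * H1) $$ (p,l) * fls_star (r2 l)) = (W2 * H1) $$ (p,j) * fls_star w"
      unfolding r2_def by (rule sum_single2[OF j])
    finally show ?thesis .
  qed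
  have H2ii: "H2 $$ (i,i) = fls_const 1"
  proof -
    have "H2 $$ (i,i) = w * fls_star u + u * fls_star w"
      using i j ij by (simp add: H2e WH2 H1ii H1ij H1jj H1ji)
    also have "u * fls_star w = fls_star (w * fls_star u)" using lu lw by (simp add: star_mult mult.commute)
    also have "\<dots> = fls_const (1/2)" using wsu by simp
    finally have "H2 $$ (i,i) = w * fls_star u + fls_const (1/2)" .
    then have "H2 $$ (i,i) = fls_const (1/2) + fls_const (1/2)" using wsu by simp
    also have "fls_const (1/2) + fls_const (1/2) = (fls_const 1 :: complex fls)" by (rule fls_eqI) simp
    finally show ?thesis .
  qed
  have "good N H2" by (rule split[OF st2(1) _ i H2ii]) (use st1(2) st2(2) in simp_all)
  then show ?thesis using st1(3) st2(3) by simp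
qed




definition za :: "complex fls \<Rightarrow> int \<Rightarrow> bool" where
  "za f a \<longleftrightarrow> (\<forall>e>a. fls_nth f e = 0)"

lemma zaD: "za f a \<Longrightarrow> e > a \<Longrightarrow> fls_nth f e = 0" unfolding za_def by auto

lemma times_top:
  assumes f: "za f a" and g: "za g b"
  shows "za (f * g) (a + b)" "fls_nth (f * g) (a + b) = fls_nth f a * fls_nth g b"
proof -
  show "za (f * g) (a + b)" unfolding za_def
  proof (intro allI impI)
    fix e assume e: "e > a + b"
    have "fls_nth (f * g) e = (\<Sum>i\<in>{}. fls_nth f i * fls_nth g (e - i))"
    proof (rule fls_times_nth_supp)
      fix i assume "fls_nth f i \<noteq> 0" "fls_nth g (e - i) \<noteq> 0"
      then have "i \<le> a" "e - i \<le> b" using zaD[OF f] zaD[OF g] by (meson not_le)+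
      with e show "i \<in> {}" by simp
    qed simp
    then show "fls_nth (f * g) e = 0" by simp
  qed
  have "fls_nth (f * g) (a + b) = (\<Sum>i\<in>{a}. fls_nth f i * fls_nth g (a + b - i))"
  proof (rule fls_times_nth_supp)
    fix i assume "fls_nth f i \<noteq> 0" "fls_nth g (a + b - i) \<noteq> 0"
    then have "i \<le> a" "a + b - i \<le> b" using zaD[OF f] zaD[OF g] by (meson not_le)+
    then show "i \<in> {a}" by simp
  qed simp
  then show "fls_nth (f * g) (a + b) = fls_nth f a * fls_nth g b" by simp
qed

lemma prod_top:
  assumes "finite I" and "\<And>i. i \<in> I \<Longrightarrow> za (f i) (a i)"
  shows "za (\<Prod>i\<in>I. f i) (\<Sum>i\<in>I. a i) \<and> fls_nth (\<Prod>i\<in>I. f i) (\<Sum>i\<in>I. a i) = (\<Prod>i\<in>I. fls_nth (f i) (a i))"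
  using assms
proof (induction I rule: finite_induct)
  case empty
  have "za 1 0" unfolding za_def by simp
  then show ?case by simp
next
  case (insert x F)
  have fx: "za (f x) (a x)" using insert by simp
  have IH: "za (\<Prod>i\<in>F. f i) (\<Sum>i\<in>F. a i)" "fls_nth (\<Prod>i\<in>F. f i) (\<Sum>i\<in>F. a i) = (\<Prod>i\<in>F. fls_nth (f i) (a i))"
    using insert by auto
  show ?case using insert times_top[OF fx IH(1)] IH(2) by simp
qed

lemma fls_nth_of_int_mult: "fls_nth (of_int z * (f :: complex fls)) e = of_int z * fls_nth f e"
  by (metis fls_mult_const_nth(1) fls_of_int)

lemma fls_const_nth_nonzero: "e \<noteq> 0 \<Longrightarrow> fls_nth (fls_const c) e = 0" by simp

definition tops_ok :: "nat \<Rightarrow> complex fls mat \<Rightarrow> (nat \<Rightarrow> int) \<Rightarrow> bool" where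
  "tops_ok N H \<tau> \<longleftrightarrow> (\<forall>i<N. \<forall>j<N. za (H $$ (i,j)) (\<tau> i))"

definition Tmat :: "nat \<Rightarrow> complex fls mat \<Rightarrow> (nat \<Rightarrow> int) \<Rightarrow> complex mat" where
  "Tmat N H \<tau> = mat N N (\<lambda>(i,j). fls_nth (H $$ (i,j)) (\<tau> i))"

lemma det_top:
  assumes H: "H \<in> carrier_mat N N" and t: "tops_ok N H \<tau>"
  shows "za (det H) (\<Sum>i<N. \<tau> i)" "fls_nth (det H) (\<Sum>i<N. \<tau> i) = det (Tmat N H \<tau>)"
proof -
  let ?S = "{p. p permutes {0..<N}}"
  have fS: "finite ?S" by (simp add: finite_permutations)
  have pt: "za (\<Prod>i=0..<N. H $$ (i, p i)) (\<Sum>i<N. \<tau> i) \<and>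
       fls_nth (\<Prod>i=0..<N. H $$ (i, p i)) (\<Sum>i<N. \<tau> i) = (\<Prod>i=0..<N. fls_nth (H $$ (i, p i)) (\<tau> i))"
    if p: "p \<in> ?S" for p
  proof -
    have "za (H $$ (i, p i)) (\<tau> i)" if "i \<in> {0..<N}" for i
      using t that p unfolding tops_ok_def by (auto simp: permutes_in_image)
    from prod_top[of "{0..<N}", OF _ this] show ?thesis by (simp add: atLeast0LessThan)
  qed
  have dH: "det H = (\<Sum>p\<in>?S. signof p * (\<Prod>i=0..<N. H $$ (i, p i)))" by (rule det_def'[OF H])
  show "za (det H) (\<Sum>i<N. \<tau> i)" unfolding za_def
  proof (intro allI impI)
    fix e assume e: "e > (\<Sum>i<N. \<tau> i)"
    show "fls_nth (det H) e = 0" unfolding dH fls_nth_sum fls_nth_of_int_mult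
    proof (rule sum.neutral, rule ballI)
      fix p assume p: "p \<in> ?S"
      have "fls_nth (\<Prod>i=0..<N. H $$ (i, p i)) e = 0" using zaD[OF conjunct1[OF pt[OF p]] e] .
      then show "of_int (sign p) * fls_nth (\<Prod>i=0..<N. H $$ (i, p i)) e = 0" by simp
    qed
  qed
  have "fls_nth (det H) (\<Sum>i<N. \<tau> i) = (\<Sum>p\<in>?S. signof p * (\<Prod>i=0..<N. fls_nth (H $$ (i, p i)) (\<tau> i)))"
    unfolding dH fls_nth_sum fls_nth_of_int_mult using pt by (auto intro!: sum.cong)
  also have "\<dots> = det (Tmat N H \<tau>)"
    by (subst det_def'[of _ N]) (auto simp: Tmat_def permutes_in_image intro!: sum.cong prod.cong)
  finally show "fls_nth (det H) (\<Sum>i<N. \<tau> i) = det (Tmat N H \<tau>)" .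
qed

lemma sum_tau_nonneg:
  assumes H: "H \<in> carrier_mat N N" and t: "tops_ok N H \<tau>" and dH: "det H = fls_const c" and c: "c \<noteq> 0"
  shows "(\<Sum>i<N. \<tau> i) \<ge> 0"
proof (rule ccontr)
  assume "\<not> (\<Sum>i<N. \<tau> i) \<ge> 0"
  then have "fls_nth (det H) 0 = 0" using zaD[OF det_top(1)[OF H t]] by simp
  then show False using dH c by simp
qed

lemma herm_low:
  assumes H: "herm N H" and t: "tops_ok N H \<tau>" and a: "a < N" and b: "b < N" and e: "- e > \<tau> b"
  shows "fls_nth (H $$ (a,b)) e = 0"
proof -
  have "fls_nth (H $$ (a,b)) e = cnj (fls_nth (H $$ (b,a)) (-e))"
    using herm_entry[OF H a b] star_nth[OF herm_lp[OF H b a]] by metis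
  also have "fls_nth (H $$ (b,a)) (-e) = 0" using t b a e unfolding tops_ok_def by (auto dest: zaD)
  finally show ?thesis by simp
qed




lemma star_shift1[simp]: "fls_star (fls_shift m 1) = fls_shift (-m) 1"
  using star_X_intpow[of "-m"] by simp

lemma za_mono: "za f a \<Longrightarrow> a \<le> b \<Longrightarrow> za f b" unfolding za_def by auto
lemma za_add: "za f a \<Longrightarrow> za g a \<Longrightarrow> za (f + g) a" unfolding za_def by auto
lemma za_zero[simp]: "za 0 a" unfolding za_def by auto
lemma za_sum: "(\<And>x. x \<in> A \<Longrightarrow> za (f x) a) \<Longrightarrow> za (\<Sum>x\<in>A. f x) a"
  unfolding za_def by (auto simp: fls_nth_sum intro!: sum.neutral)
lemma za_cX: "za (fls_const c * fls_X_intpow s) s"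
  unfolding za_def by simp

lemma nth_cX': "fls_nth (fls_const c * fls_shift m 1 * (f :: complex fls)) e = c * fls_nth f (e + m)"
proof -
  have "fls_const c * fls_shift m 1 * f = fls_const c * fls_shift m f"
    using fls_X_intpow_times_conv_shift(1)[of "-m" f] by (simp only: mult.assoc minus_minus)
  then have "fls_nth (fls_const c * fls_shift m 1 * f) e = fls_nth (fls_const c * fls_shift m f) e" by (rule arg_cong)
  also have "\<dots> = c * fls_nth f (e + m)" by simp
  finally show ?thesis .
qed

lemma nth_cX: "fls_nth (fls_const c * fls_X_intpow s * (f :: complex fls)) e = c * fls_nth f (e - s)"
  using nth_cX'[of c "-s" f e] by simp

lemma sum_upd: "k < (N::nat) \<Longrightarrow> (\<Sum>i<N. (\<tau>(k := v)) i) = (\<Sum>i<N. \<tau> i) - \<tau> k + (v::int)"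
proof -
  assume k: "k < N"
  have "(\<Sum>i<N. (\<tau>(k := v)) i) = (\<tau>(k := v)) k + (\<Sum>i\<in>{..<N} - {k}. (\<tau>(k := v)) i)"
    using k by (subst sum.remove[of _ k]) auto
  also have "(\<Sum>i\<in>{..<N} - {k}. (\<tau>(k := v)) i) = (\<Sum>i\<in>{..<N} - {k}. \<tau> i)" by (rule sum.cong) auto
  also have "(\<Sum>i<N. \<tau> i) = \<tau> k + (\<Sum>i\<in>{..<N} - {k}. \<tau> i)"
    using k by (subst sum.remove[of _ k]) auto
  ultimately show ?thesis by simp
qed

lemma reduce_step:
  assumes H: "herm N H" and t: "tops_ok N H \<tau>" and dH: "det H = fls_const c" and pos: "(\<Sum>i<N. \<tau> i) > 0"
  shows "\<exists>H' \<tau>'. herm N H' \<and> det H' = det H \<and> tops_ok N H' \<tau>' \<and> (\<Sum>i<N. \<tau>' i) < (\<Sum>i<N. \<tau> i) \<and> (good N H' \<longrightarrow> good N H)"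
proof -
  have Hc: "H \<in> carrier_mat N N" using H by (rule herm_carrier)
  let ?T = "Tmat N H \<tau>"
  have Tc: "?T \<in> carrier_mat N N" unfolding Tmat_def by simp
  have "det ?T = fls_nth (det H) (\<Sum>i<N. \<tau> i)" using det_top(2)[OF Hc t] by simp
  also have "\<dots> = 0" using dH pos by simp
  finally have "det (transpose_mat ?T) = 0" using det_transpose[OF Tc] by simp
  then obtain w where w: "w \<in> carrier_vec N" "w \<noteq> 0\<^sub>v N" "transpose_mat ?T *\<^sub>v w = 0\<^sub>v N"
    using det_0_iff_vec_prod_zero[of "transpose_mat ?T" N] Tc by auto
  have wT: "(\<Sum>i<N. w $ i * fls_nth (H $$ (i,j)) (\<tau> i)) = 0" if j: "j < N" for j
  proof -
    have "(transpose_mat ?T *\<^sub>v w) $ j = 0" using w(3) j by simp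
    moreover have "(transpose_mat ?T *\<^sub>v w) $ j = (\<Sum>i<N. fls_nth (H $$ (i,j)) (\<tau> i) * w $ i)"
      using j w(1) Tc by (auto simp: scalar_prod_def Tmat_def atLeast0LessThan intro!: sum.cong)
    ultimately show ?thesis by (simp add: mult.commute)
  qed
  obtain k0 where k0: "k0 < N" "w $ k0 \<noteq> 0"
    using w(1,2) by (metis carrier_vecD eq_vecI index_zero_vec(1,2))
  define S where "S = {i. i < N \<and> w $ i \<noteq> 0}"
  have fS: "finite S" unfolding S_def by simp
  have neS: "S \<noteq> {}" using k0 unfolding S_def by auto
  define M where "M = Max (\<tau> ` S)"
  have "M \<in> \<tau> ` S" unfolding M_def using fS neS by (intro Max_in) auto
  then obtain k where kS: "k \<in> S" and kM: "\<tau> k = M" by auto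
  have kmax: "\<And>i. i < N \<Longrightarrow> w $ i \<noteq> 0 \<Longrightarrow> \<tau> i \<le> \<tau> k"
    using kM fS unfolding M_def S_def by auto
  have k: "k < N" and wk: "w $ k \<noteq> 0" using kS unfolding S_def by auto
  define r where "r l = (if l = k then 0 else fls_const (w $ l / w $ k) * fls_X_intpow (\<tau> k - \<tau> l))" for l
  have lr: "\<And>l. l < N \<Longrightarrow> is_laurent_poly (r l)" unfolding r_def by simp
  have rk: "r k = 0" unfolding r_def by simp
  define W where "W = rowop N k r"
  define H' where "H' = W * H * mat_star W"
  note st = rowop_step[of N H k r, OF H k rk lr, folded W_def, folded H'_def]
  define \<tau>' where "\<tau>' = \<tau>(k := \<tau> k - 1)"
  have WH: "(W * H) $$ (a,b) = H $$ (a,b) + (if a = k then (\<Sum>l<N. r l * H $$ (l,b)) else 0)" if "a < N" "b < N" for a b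
    unfolding W_def by (rule rowop_mult_entry[OF Hc that])
  have H'e: "H' $$ (a,b) = (W * H) $$ (a,b) + (if b = k then (\<Sum>l<N. (W * H) $$ (a,l) * fls_star (r l)) else 0)"
    if "a < N" "b < N" for a b
    unfolding H'_def W_def by (rule rowop_conj_entry[OF Hc that lr])
  have tH: "za (H $$ (a,b)) (\<tau> a)" if "a < N" "b < N" for a b using t that unfolding tops_ok_def by auto
  have rowk: "za ((W * H) $$ (k,b)) (\<tau> k - 1)" if b: "b < N" for b
    unfolding za_def
  proof (intro allI impI)
    fix e assume e: "e > \<tau> k - 1"
    define g where "g = (\<Sum>l<N. w $ l * fls_nth (H $$ (l,b)) (e - (\<tau> k - \<tau> l)))"
    have "fls_nth ((W * H) $$ (k,b)) e = fls_nth (H $$ (k,b)) e + (\<Sum>l<N. fls_nth (r l * H $$ (l,b)) e)"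
      using WH[OF k b] by (simp add: fls_nth_sum)
    also have "(\<Sum>l<N. fls_nth (r l * H $$ (l,b)) e) =
       (\<Sum>l<N. if l = k then 0 else w $ l / w $ k * fls_nth (H $$ (l,b)) (e - (\<tau> k - \<tau> l)))"
    proof (rule sum.cong[OF refl])
      fix l assume "l \<in> {..<N}"
      show "fls_nth (r l * H $$ (l,b)) e = (if l = k then 0 else w $ l / w $ k * fls_nth (H $$ (l,b)) (e - (\<tau> k - \<tau> l)))"
      proof (cases "l = k")
        case True then show ?thesis by (simp add: rk)
      next
        case False
        then have "r l = fls_const (w $ l / w $ k) * fls_X_intpow (\<tau> k - \<tau> l)" by (simp add: r_def)
        then show ?thesis using False by (simp only: nth_cX if_False)
      qed
    qed
    also have "fls_nth (H $$ (k,b)) e + \<dots> = g / w $ k"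
    proof -
      have "g / w $ k = (\<Sum>l<N. w $ l / w $ k * fls_nth (H $$ (l,b)) (e - (\<tau> k - \<tau> l)))"
        unfolding g_def by (simp add: sum_divide_distrib)
      also have "\<dots> = (\<Sum>l<N. (if l = k then fls_nth (H $$ (k,b)) e else 0) +
          (if l = k then 0 else w $ l / w $ k * fls_nth (H $$ (l,b)) (e - (\<tau> k - \<tau> l))))"
        by (rule sum.cong) (use wk in auto)
      also have "\<dots> = fls_nth (H $$ (k,b)) e + (\<Sum>l<N. if l = k then 0 else w $ l / w $ k * fls_nth (H $$ (l,b)) (e - (\<tau> k - \<tau> l)))"
        using k by (simp add: sum.distrib)
      finally show ?thesis by simp
    qed
    also have "g = 0"
    proof (cases "e = \<tau> k")
      case True
      then show ?thesis unfolding g_def using wT[OF b] by simp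
    next
      case False
      then have e': "e > \<tau> k" using e by simp
      show ?thesis unfolding g_def
      proof (rule sum.neutral, rule ballI)
        fix l assume l: "l \<in> {..<N}"
        show "w $ l * fls_nth (H $$ (l,b)) (e - (\<tau> k - \<tau> l)) = 0"
        proof (cases "w $ l = 0")
          case False
          then have "\<tau> l \<le> \<tau> k" using kmax l by auto
          then have "e - \<tau> k + \<tau> l > \<tau> l" using e' by simp
          then show ?thesis using zaD[OF tH[of l b]] l b by simp
        qed simp
      qed
    qed
    finally show "fls_nth ((W * H) $$ (k,b)) e = 0" by simp
  qed
  have rowa: "za ((W * H) $$ (a,b)) (\<tau>' a)" if "a < N" "b < N" for a b
  proof (cases "a = k")
    case True then show ?thesis using rowk that unfolding \<tau>'_def by simp
  next
    case False then show ?thesis using WH[OF that] tH[OF that] unfolding \<tau>'_def by simp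
  qed
  have lterm: "za ((W * H) $$ (a,l) * fls_star (r l)) (\<tau>' a)" if a: "a < N" and l: "l < N" for a l
  proof (cases "l = k \<or> w $ l = 0")
    case True
    then have "r l = 0" unfolding r_def by auto
    then show ?thesis by simp
  next
    case False
    then have lk: "l \<noteq> k" and wl: "w $ l \<noteq> 0" by auto
    have sr: "fls_star (r l) = fls_const (cnj (w $ l / w $ k)) * fls_X_intpow (\<tau> l - \<tau> k)"
      using lk unfolding r_def by (simp add: star_mult)
    have le: "\<tau> l \<le> \<tau> k" using kmax l wl by simp
    have "za ((W * H) $$ (a,l) * fls_star (r l)) (\<tau>' a + (\<tau> l - \<tau> k))"
      unfolding sr by (rule times_top(1)[OF rowa[OF a l] za_cX])
    then show ?thesis by (rule za_mono) (use le in simp)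
  qed
  have tH': "tops_ok N H' \<tau>'" unfolding tops_ok_def
  proof (intro allI impI)
    fix a b assume a: "a < N" and b: "b < N"
    show "za (H' $$ (a,b)) (\<tau>' a)"
      unfolding H'e[OF a b]
      by (rule za_add[OF rowa[OF a b]]) (auto intro!: za_sum lterm a)
  qed
  have sum': "(\<Sum>i<N. \<tau>' i) < (\<Sum>i<N. \<tau> i)" unfolding \<tau>'_def using sum_upd[OF k] by simp
  show ?thesis using st tH' sum' by blast
qed




lemma phase2:
  assumes H: "herm N H" and t: "tops_ok N H \<tau>" and s0: "(\<Sum>i<N. \<tau> i) = 0"
    and dH: "det H = fls_const c" and c: "c \<noteq> 0" and N: "N > 0"
  shows "(\<exists>i d. i < N \<and> H $$ (i,i) = fls_const d \<and> d \<noteq> 0 \<and> cnj d = d) \<or>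
         (\<exists>i j a t. i < N \<and> j < N \<and> i \<noteq> j \<and> H $$ (i,i) = 0 \<and> H $$ (i,j) = fls_const a * fls_X_intpow t \<and> a \<noteq> 0)"
proof -
  have Hc: "H \<in> carrier_mat N N" using H by (rule herm_carrier)
  let ?T = "Tmat N H \<tau>"
  have Tc: "?T \<in> carrier_mat N N" unfolding Tmat_def by simp
  have dT: "det ?T = c" using det_top(2)[OF Hc t] s0 dH by simp
  obtain p where p: "p permutes {0..<N}" and pr: "(\<Prod>i=0..<N. ?T $$ (i, p i)) \<noteq> 0"
  proof (rule ccontr)
    assume "\<not> thesis"
    then have "\<forall>p. p permutes {0..<N} \<longrightarrow> (\<Prod>i=0..<N. ?T $$ (i, p i)) = 0" using that by blast
    then have "det ?T = 0" unfolding det_def'[OF Tc] by (auto intro!: sum.neutral)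
    with dT c show False by simp
  qed
  have pN: "\<And>i. i < N \<Longrightarrow> p i < N" using p by (metis atLeast0LessThan lessThan_iff permutes_in_image)
  have nz: "fls_nth (H $$ (i, p i)) (\<tau> i) \<noteq> 0" if i: "i < N" for i
  proof -
    have "?T $$ (i, p i) \<noteq> 0" using pr i by (auto simp: prod_zero_iff)
    then show ?thesis using i pN[OF i] by (simp add: Tmat_def)
  qed
  have tH: "\<And>a b e. a < N \<Longrightarrow> b < N \<Longrightarrow> e > \<tau> a \<Longrightarrow> fls_nth (H $$ (a,b)) e = 0"
    using t unfolding tops_ok_def by (auto dest: zaD)
  have ge: "\<tau> i + \<tau> (p i) \<ge> 0" if i: "i < N" for i
  proof (rule ccontr)
    assume "\<not> \<tau> i + \<tau> (p i) \<ge> 0"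
    then have "- \<tau> i > \<tau> (p i)" by simp
    then have "fls_nth (H $$ (i, p i)) (\<tau> i) = 0" by (rule herm_low[OF H t i pN[OF i]])
    with nz[OF i] show False by simp
  qed
  have pl: "p permutes {..<N}" using p by (simp add: atLeast0LessThan)
  have "(\<Sum>i<N. \<tau> i + \<tau> (p i)) = (\<Sum>i<N. \<tau> i) + (\<Sum>i<N. \<tau> (p i))" by (simp add: sum.distrib)
  also have "(\<Sum>i<N. \<tau> (p i)) = (\<Sum>i<N. \<tau> i)" using sum.permute[OF pl, of \<tau>] by (simp add: comp_def)
  finally have "(\<Sum>i<N. \<tau> i + \<tau> (p i)) = 0" using s0 by simp
  then have eq0: "\<tau> i + \<tau> (p i) = 0" if "i < N" for i
    using sum_nonneg_eq_0_iff[of "{..<N}" "\<lambda>i. \<tau> i + \<tau> (p i)"] ge that by auto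
  have mono: "H $$ (i, p i) = fls_const (fls_nth (H $$ (i, p i)) (\<tau> i)) * fls_X_intpow (\<tau> i)" if i: "i < N" for i
  proof (rule fls_eqI)
    fix e
    show "fls_nth (H $$ (i, p i)) e = fls_nth (fls_const (fls_nth (H $$ (i, p i)) (\<tau> i)) * fls_X_intpow (\<tau> i)) e"
    proof (cases "e = \<tau> i")
      case False
      then consider "e > \<tau> i" | "e < \<tau> i" by linarith
      then have "fls_nth (H $$ (i, p i)) e = 0"
      proof cases
        case 1 then show ?thesis using tH i pN[OF i] by simp
      next
        case 2 then have "- e > \<tau> (p i)" using eq0[OF i] by simp
        then show ?thesis by (rule herm_low[OF H t i pN[OF i]])
      qed
      then show ?thesis using False by simp
    qed simp
  qed
  show ?thesis
  proof (cases "\<exists>i<N. \<tau> i < 0")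
    case True
    then obtain i where i: "i < N" and ti: "\<tau> i < 0" by blast
    have Hii: "H $$ (i,i) = 0"
    proof (rule fls_eqI)
      fix e
      show "fls_nth (H $$ (i,i)) e = fls_nth 0 e"
      proof (cases "e > \<tau> i")
        case True then show ?thesis using tH i by simp
      next
        case False then have "- e > \<tau> i" using ti by simp
        then show ?thesis using herm_low[OF H t i i] by simp
      qed
    qed
    have pi: "p i \<noteq> i" using eq0[OF i] ti by auto
    show ?thesis
      by (rule disjI2, rule exI[of _ i], rule exI[of _ "p i"], rule exI[of _ "fls_nth (H $$ (i,p i)) (\<tau> i)"], rule exI[of _ "\<tau> i"])
        (use i pN[OF i] pi Hii mono[OF i] nz[OF i] in simp)
  next
    case False
    then have tnn: "\<And>i. i < N \<Longrightarrow> \<tau> i \<ge> 0" by (meson not_le)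
    have t0: "\<tau> i = 0" if "i < N" for i
      using sum_nonneg_eq_0_iff[of "{..<N}" \<tau>] s0 tnn that by auto
    have const: "H $$ (a,b) = fls_const (fls_nth (H $$ (a,b)) 0)" if a: "a < N" and b: "b < N" for a b
    proof (rule fls_eqI)
      fix e
      show "fls_nth (H $$ (a,b)) e = fls_nth (fls_const (fls_nth (H $$ (a,b)) 0)) e"
      proof (cases "e = 0")
        case False
        then consider "e > 0" | "e < 0" by linarith
        then have "fls_nth (H $$ (a,b)) e = 0"
        proof cases
          case 1 then show ?thesis using tH a b t0[OF a] by simp
        next
          case 2 then have "- e > \<tau> b" using t0[OF b] by simp
          then show ?thesis by (rule herm_low[OF H t a b])
        qed
        then show ?thesis using False by simp
      qed simp
    qed
    show ?thesis
    proof (cases "\<exists>i<N. H $$ (i,i) \<noteq> 0")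
      case True
      then obtain i where i: "i < N" and Hi: "H $$ (i,i) \<noteq> 0" by blast
      define d where "d = fls_nth (H $$ (i,i)) 0"
      have Hd: "H $$ (i,i) = fls_const d" unfolding d_def by (rule const[OF i i])
      have d0: "d \<noteq> 0" using Hi Hd by auto
      have "cnj d = d"
      proof -
        have "fls_star (H $$ (i,i)) = H $$ (i,i)" using herm_entry[OF H i i] .
        then have "fls_const (cnj d) = fls_const d" using Hd by simp
        then have "fls_nth (fls_const (cnj d)) 0 = fls_nth (fls_const d) 0" by (rule arg_cong)
        then show ?thesis by simp
      qed
      then show ?thesis
        by (intro disjI1 exI[of _ i] exI[of _ d]) (use i Hd d0 in simp)
    next
      case False
      then have H00: "H $$ (0,0) = 0" using N by auto
      have p0: "p 0 \<noteq> 0"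
      proof
        assume "p 0 = 0"
        then have "fls_nth (H $$ (0, p 0)) (\<tau> 0) = 0" using H00 by simp
        with nz[OF N] show False by simp
      qed
      show ?thesis
        by (rule disjI2, rule exI[of _ 0], rule exI[of _ "p 0"], rule exI[of _ "fls_nth (H $$ (0,p 0)) (\<tau> 0)"], rule exI[of _ "\<tau> 0"])
          (use p0 N pN[OF N] H00 mono[OF N] nz[OF N] in simp)
    qed
  qed
qed

lemma exists_tops:
  assumes H: "herm N H"
  shows "\<exists>B. tops_ok N H (\<lambda>_. B)"
proof -
  have ex: "\<exists>B. B \<ge> 0 \<and> (\<forall>e. B < \<bar>e\<bar> \<longrightarrow> fls_nth (H $$ (i,j)) e = 0)" if "i < N" "j < N" for i j
    using lp_boundE[OF herm_lp[OF H that]] by metis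
  define Bf where "Bf i j = (SOME B. B \<ge> 0 \<and> (\<forall>e. B < \<bar>e\<bar> \<longrightarrow> fls_nth (H $$ (i,j)) e = 0))" for i j
  have Bf: "Bf i j \<ge> 0 \<and> (\<forall>e. Bf i j < \<bar>e\<bar> \<longrightarrow> fls_nth (H $$ (i,j)) e = 0)" if "i < N" "j < N" for i j
    unfolding Bf_def by (rule someI_ex[OF ex[OF that]])
  define B where "B = (\<Sum>i<N. \<Sum>j<N. Bf i j)"
  have le: "Bf i j \<le> B" if i: "i < N" and j: "j < N" for i j
  proof -
    have "Bf i j \<le> (\<Sum>j<N. Bf i j)"
      by (rule member_le_sum) (use i j Bf in auto)
    also have "\<dots> \<le> B" unfolding B_def
      by (rule member_le_sum[of i "{..<N}" "\<lambda>i. \<Sum>j<N. Bf i j"]) (use i Bf in \<open>auto intro!: sum_nonneg\<close>)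
    finally show ?thesis .
  qed
  have "tops_ok N H (\<lambda>_. B)" unfolding tops_ok_def za_def
  proof (intro allI impI)
    fix i j e assume i: "i < N" and j: "j < N" and e: "e > B"
    have "Bf i j < \<bar>e\<bar>" using le[OF i j] e by simp
    then show "fls_nth (H $$ (i,j)) e = 0" using Bf[OF i j] by blast
  qed
  then show ?thesis by blast
qed

lemma main:
  "herm N H \<Longrightarrow> c \<noteq> 0 \<Longrightarrow> det H = fls_const c \<Longrightarrow> good N H"
proof (induction N arbitrary: H c)
  case 0
  from \<open>herm 0 H\<close> have Hc: "H \<in> carrier_mat 0 0" by (rule herm_carrier)
  have "H = 1\<^sub>m 0 * signature_mat 0 0 * mat_star (1\<^sub>m 0)"
    by (rule eq_matI) (use Hc in auto)
  then show ?case unfolding good_def by (intro exI[of _ 0] exI[of _ "1\<^sub>m 0"]) auto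
next
  case (Suc n)
  let ?N = "Suc n"
  have split: "good ?N G" if "herm ?N G" "c' \<noteq> 0" "det G = fls_const c'" "i < ?N" "G $$ (i,i) = fls_const d" "d \<noteq> 0" "cnj d = d"
    for G c' i d
    by (rule split_good[OF Suc.IH that])
  have inner: "\<forall>G \<tau>. nat (\<Sum>i<?N. \<tau> i) = m \<longrightarrow> herm ?N G \<longrightarrow> det G = fls_const c \<longrightarrow> tops_ok ?N G \<tau> \<longrightarrow> good ?N G" for m
  proof (induction m rule: less_induct)
    case (less m)
    show ?case
    proof (intro allI impI)
      fix G \<tau> assume m: "nat (\<Sum>i<?N. \<tau> i) = m" and G: "herm ?N G" and dG: "det G = fls_const c" and t: "tops_ok ?N G \<tau>"
      have Gc: "G \<in> carrier_mat ?N ?N" using G by (rule herm_carrier)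
      have nn: "(\<Sum>i<?N. \<tau> i) \<ge> 0" by (rule sum_tau_nonneg[OF Gc t dG Suc.prems(2)])
      show "good ?N G"
      proof (cases "(\<Sum>i<?N. \<tau> i) > 0")
        case True
        from reduce_step[OF G t dG True] obtain G' \<tau>' where
          G': "herm ?N G'" "det G' = det G" "tops_ok ?N G' \<tau>'" "(\<Sum>i<?N. \<tau>' i) < (\<Sum>i<?N. \<tau> i)" "good ?N G' \<longrightarrow> good ?N G"
          by blast
        have Gc': "G' \<in> carrier_mat ?N ?N" using G'(1) by (rule herm_carrier)
        have nn': "(\<Sum>i<?N. \<tau>' i) \<ge> 0" by (rule sum_tau_nonneg[OF Gc' G'(3)]) (use G'(2) dG Suc.prems(2) in auto)
        have lt: "nat (\<Sum>i<?N. \<tau>' i) < m" using m G'(4) nn' by linarith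
        have "good ?N G'" using less.IH[OF lt] G' dG by auto
        then show ?thesis using G'(5) by simp
      next
        case False
        then have s0: "(\<Sum>i<?N. \<tau> i) = 0" using nn by simp
        from phase2[OF G t s0 dG Suc.prems(2) zero_less_Suc] show ?thesis
        proof
          assume "\<exists>i d. i < ?N \<and> G $$ (i,i) = fls_const d \<and> d \<noteq> 0 \<and> cnj d = d"
          then obtain i d where "i < ?N" "G $$ (i,i) = fls_const d" "d \<noteq> 0" "cnj d = d" by blast
          then show ?thesis using split[OF G Suc.prems(2) dG] by blast
        next
          assume "\<exists>i j a t. i < ?N \<and> j < ?N \<and> i \<noteq> j \<and> G $$ (i,i) = 0 \<and> G $$ (i,j) = fls_const a * fls_X_intpow t \<and> a \<noteq> 0"
          then obtain i j a t where ij: "i < ?N" "j < ?N" "i \<noteq> j" "G $$ (i,i) = 0" "G $$ (i,j) = fls_const a * fls_X_intpow t" "a \<noteq> 0"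
            by blast
          show ?thesis
          proof (rule pair_good[OF _ G ij])
            fix G' i' d assume "herm ?N G'" "det G' = det G" "i' < ?N" "G' $$ (i',i') = fls_const d" "d \<noteq> 0" "cnj d = d"
            then show "good ?N G'" using split[of G' c i' d] dG Suc.prems(2) by simp
          qed
        qed
      qed
    qed
  qed
  obtain B where B: "tops_ok ?N H (\<lambda>_. B)" using exists_tops[OF Suc.prems(1)] by blast
  show ?case using inner[of "nat (\<Sum>i<?N. B)"] Suc.prems B by blast
qed


theorem theorem4p1:
  fixes n :: nat and A :: "complex fls mat"
  assumes "A \<in> carrier_mat n n"
    and "hermite_lp_mat A"
    and "c \<noteq> 0"
    and "det A = fls_const c * fls_X_intpow k"
  shows "\<exists>p m U. p + m = n \<and> U \<in> carrier_mat n n \<and> laurent_poly_mat U \<and>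
           A = U * signature_mat p m * mat_star U"
proof -
  have lA: "laurent_poly_mat A" and sA: "mat_star A = A" using assms(2) unfolding hermite_lp_mat_def by auto
  have hA: "herm n A" unfolding herm_def using assms(1) lA sA by auto
  have "det A = fls_star (det A)" using det_star[OF assms(1) lA] sA by simp
  then have "fls_nth (det A) k = fls_nth (fls_star (det A)) k" by simp
  also have "\<dots> = cnj (fls_nth (det A) (-k))"
    by (rule star_nth) (simp add: assms(4))
  finally have st: "fls_nth (det A) k = cnj (fls_nth (det A) (-k))" .
  have k0: "k = 0"
  proof (rule ccontr)
    assume k: "k \<noteq> 0"
    have "fls_nth (det A) k = c" using assms(4) by simp
    moreover have "fls_nth (det A) (-k) = 0" using assms(4) k by simp
    ultimately have "c = cnj 0" using st by simp
    with assms(3) show False by simp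
  qed
  have dA: "det A = fls_const c" using assms(4) k0 by simp
  have "good n A" by (rule main[OF hA assms(3) dA])
  then show ?thesis unfolding good_def .
qed

end
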